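(* Let $K$ be any local field with ring of integers $\mathcal O$, residue field $\mathbf F$, and $q=\#\mathbf F$. Let $(H_n)_{n\ge1}$ be a sequence of open subgroups of $\mathcal O$ with $H_{n+1}\subseteq H_n$ and $\bigcap_n H_n=0$. Suppose $e_0,e_1,e_2,\dots\in C(\mathcal O,K)$ each map $\mathcal O$ into $\mathcal O$, and that for every $n\ge1$ the reductions $\overline e_0,\dots,\overline e_{n-1}\in C(\mathcal O,\mathbf F)$ are constant on cosets of $H_n$ and the induced map $\mathcal O/H_n\to\mathbf F^n$, $x\mapsto(\overline e_0(x),\dots,\overline e_{n-1}(x))$, is bijective (so $\#\mathcal O/H_n=q^n$). Then the extension of $(e_j)$ by $q$-digit expansions is an orthonormal basis of $C(\mathcal O,K)$.
   Context: A local field is a field complete with respect to a nontrivial discrete nonarchimedean absolute value with finite residue field. $C(\mathcal O,K)$ is the $K$-Banach space of continuous functions $\mathcal O\to K$ with the sup-norm; $C(\mathcal O,\mathbf F)$ is the space of continuous (i.e. locally constant) maps to the discrete field $\mathbf F$; $\overline e$ denotes $e$ composed with reduction $\mathcal O\to\mathbf F$. An orthonormal basis of a $K$-Banach space $E$ is a sequence $\{f_n\}$ such that each $x\in E$ is $x=\sum c_nf_n$ with $c_n\in K$, $c_n\to0$, $\|x\|=\max|c_n|$. Extension by $q$-digits: for $i=c_0+c_1q+\dots+c_{n-1}q^{n-1}$ with $0\le c_j\le q-1$, set $f_i=e_0^{c_0}\cdots e_{n-1}^{c_{n-1}}$ (pointwise products, $e_j^0=1$). *)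

theory Defs
  imports Complex_Main "HOL-Library.FuncSet"
begin

definition nonarch_abs :: "('a::field \<Rightarrow> real) \<Rightarrow> bool" where
  "nonarch_abs av \<longleftrightarrow>
     (\<forall>x. 0 \<le> av x) \<and> (\<forall>x. av x = 0 \<longleftrightarrow> x = 0) \<and>
     (\<forall>x y. av (x * y) = av x * av y) \<and>
     (\<forall>x y. av (x + y) \<le> max (av x) (av y))"

definition intring :: "('a::field \<Rightarrow> real) \<Rightarrow> 'a set" where
  "intring av = {x. av x \<le> 1}"

definition red :: "('a::field \<Rightarrow> real) \<Rightarrow> 'a \<Rightarrow> 'a set" where
  "red av x = {y \<in> intring av. av (x - y) < 1}"

definition resfield :: "('a::field \<Rightarrow> real) \<Rightarrow> 'a set set" where
  "resfield av = red av ` intring av"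

text \<open>Local field: complete w.r.t. a nontrivial discrete nonarchimedean absolute
  value with finite residue field.\<close>

definition local_field :: "('a::field \<Rightarrow> real) \<Rightarrow> bool" where
  "local_field av \<longleftrightarrow>
     nonarch_abs av \<and>
     (\<exists>x. x \<noteq> 0 \<and> av x \<noteq> 1) \<and>
     (\<forall>t \<in> av ` (UNIV - {0}). \<exists>\<epsilon>>0. \<forall>s \<in> av ` (UNIV - {0}). \<bar>s - t\<bar> < \<epsilon> \<longrightarrow> s = t) \<and>
     (\<forall>X::nat \<Rightarrow> 'a. (\<forall>\<epsilon>>0. \<exists>N. \<forall>m\<ge>N. \<forall>n\<ge>N. av (X m - X n) < \<epsilon>) \<longrightarrow>
         (\<exists>L. \<forall>\<epsilon>>0. \<exists>N. \<forall>n\<ge>N. av (X n - L) < \<epsilon>)) \<and>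
     finite (resfield av)"

text \<open>Continuous functions O -> K (only values on O matter).\<close>

definition cont_O :: "('a::field \<Rightarrow> real) \<Rightarrow> ('a \<Rightarrow> 'a) \<Rightarrow> bool" where
  "cont_O av f \<longleftrightarrow> (\<forall>x \<in> intring av. \<forall>\<epsilon>>0. \<exists>\<delta>>0. \<forall>y \<in> intring av.
       av (y - x) < \<delta> \<longrightarrow> av (f y - f x) < \<epsilon>)"

definition supnorm :: "('a::field \<Rightarrow> real) \<Rightarrow> ('a \<Rightarrow> 'a) \<Rightarrow> real" where
  "supnorm av f = (SUP x \<in> intring av. av (f x))"

definition orthonormal_basis :: "('a::field \<Rightarrow> real) \<Rightarrow> (nat \<Rightarrow> 'a \<Rightarrow> 'a) \<Rightarrow> bool" where
  "orthonormal_basis av b \<longleftrightarrow>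
     (\<forall>n. cont_O av (b n)) \<and>
     (\<forall>f. cont_O av f \<longrightarrow>
        (\<exists>c::nat \<Rightarrow> 'a. (\<lambda>n. av (c n)) \<longlonglongrightarrow> 0 \<and>
           (\<lambda>N. supnorm av (\<lambda>x. f x - (\<Sum>n<N. c n * b n x))) \<longlonglongrightarrow> 0 \<and>
           supnorm av f = (SUP n. av (c n))))"

definition open_subgroup_O :: "('a::field \<Rightarrow> real) \<Rightarrow> 'a set \<Rightarrow> bool" where
  "open_subgroup_O av H \<longleftrightarrow> H \<subseteq> intring av \<and> 0 \<in> H \<and>
     (\<forall>x\<in>H. \<forall>y\<in>H. x + y \<in> H \<and> - x \<in> H) \<and>
     (\<forall>x\<in>H. \<exists>r>0. \<forall>y \<in> intring av. av (y - x) < r \<longrightarrow> y \<in> H)"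

definition cosets_O :: "('a::field \<Rightarrow> real) \<Rightarrow> 'a set \<Rightarrow> 'a set set" where
  "cosets_O av H = intring av // {(x, y). x \<in> intring av \<and> y \<in> intring av \<and> x - y \<in> H}"

text \<open>Induced map O/H_n -> F^n (well defined under the constancy hypothesis).\<close>

definition induced_map :: "('a::field \<Rightarrow> real) \<Rightarrow> (nat \<Rightarrow> 'a \<Rightarrow> 'a) \<Rightarrow> nat \<Rightarrow> 'a set \<Rightarrow> (nat \<Rightarrow> 'a set)" where
  "induced_map av e n C = (\<lambda>j \<in> {..<n}. red av (e j (SOME x. x \<in> C)))"

text \<open>Extension by q-digits: f_i = prod_j e_j^(j-th base-q digit of i).
  Digits beyond the length of i are 0 and contribute e_j^0 = 1.\<close>

definition digit_ext :: "nat \<Rightarrow> (nat \<Rightarrow> 'a \<Rightarrow> 'a::field) \<Rightarrow> nat \<Rightarrow> 'a \<Rightarrow> 'a" where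
  "digit_ext q e i x = (\<Prod>j<i. e j x ^ ((i div q ^ j) mod q))"

end

theory Submission
  imports Defs "HOL-Computational_Algebra.Polynomial"
begin


locale vf =
  fixes av :: "'a::field \<Rightarrow> real"
  assumes na: "nonarch_abs av"
begin

lemma av_nonneg[simp]: "0 \<le> av x" using na unfolding nonarch_abs_def by blast
lemma av_eq0[simp]: "av x = 0 \<longleftrightarrow> x = 0" using na unfolding nonarch_abs_def by blast
lemma av_mult: "av (x * y) = av x * av y" using na unfolding nonarch_abs_def by blast
lemma av_add: "av (x + y) \<le> max (av x) (av y)" using na unfolding nonarch_abs_def by blast
lemma av_0[simp]: "av 0 = 0" by simp
lemma av_1[simp]: "av 1 = 1"
proof -
  have "av 1 = av 1 * av 1" using av_mult[of 1 1] by simp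
  moreover have "av 1 \<noteq> 0" by simp
  ultimately show ?thesis by (metis mult_cancel_left1)
qed
lemma av_pos: "x \<noteq> 0 \<Longrightarrow> 0 < av x" using av_nonneg[of x] av_eq0[of x] by linarith
lemma av_m1[simp]: "av (-1) = 1"
proof -
  have "av (-1) * av (-1) = 1" using av_mult[of "-1" "-1"] by simp
  then show ?thesis using av_nonneg[of "-1"]
    by (metis abs_of_nonneg abs_one mult_1_left mult_cancel_left2 one_neq_neg_one  power2_eq_square real_sqrt_abs real_sqrt_one)
qed
lemma av_uminus[simp]: "av (- x) = av x"
  using av_mult[of "-1" x] by simp
lemma av_commute: "av (x - y) = av (y - x)"
  by (metis av_uminus minus_diff_eq)
lemma av_diff: "av (x - y) \<le> max (av x) (av y)"
  using av_add[of x "-y"] by simp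
lemma av_inverse: "av (inverse x) = inverse (av x)"
proof (cases "x = 0")
  case False
  then have "av x * av (inverse x) = 1" using av_mult[of x "inverse x"] by simp
  then show ?thesis by (metis inverse_unique)
qed simp
lemma av_divide: "av (x / y) = av x / av y"
  by (simp add: divide_inverse av_mult av_inverse)
lemma av_power: "av (x ^ n) = av x ^ n"
  by (induction n) (simp_all add: av_mult)
lemma av_prod: "av (prod f A) = prod (\<lambda>i. av (f i)) A"
  by (induction A rule: infinite_finite_induct) (simp_all add: av_mult)

lemma av_add_le: "av x \<le> B \<Longrightarrow> av y \<le> B \<Longrightarrow> av (x + y) \<le> B"
  using av_add[of x y] by simp
lemma av_add_less: "av x < B \<Longrightarrow> av y < B \<Longrightarrow> av (x + y) < B"
  using av_add[of x y] by simp
lemma av_diff_le: "av x \<le> B \<Longrightarrow> av y \<le> B \<Longrightarrow> av (x - y) \<le> B"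
  using av_diff[of x y] by simp
lemma av_diff_less: "av x < B \<Longrightarrow> av y < B \<Longrightarrow> av (x - y) < B"
  using av_diff[of x y] by simp
lemma av_sum_le: "0 \<le> B \<Longrightarrow> (\<And>i. i \<in> A \<Longrightarrow> av (f i) \<le> B) \<Longrightarrow> av (sum f A) \<le> B"
  by (induction A rule: infinite_finite_induct) (auto intro!: av_add_le)
lemma av_sum_less: "0 < B \<Longrightarrow> (\<And>i. i \<in> A \<Longrightarrow> av (f i) < B) \<Longrightarrow> av (sum f A) < B"
  by (induction A rule: infinite_finite_induct) (auto intro!: av_add_less)
lemma av_mult_le1: "av x \<le> 1 \<Longrightarrow> av y \<le> B \<Longrightarrow> av (x * y) \<le> B"
  by (simp add: av_mult) (metis av_nonneg mult_le_one mult_left_le_one_le mult_right_le_one_le order.trans mult_mono  mult_1_left)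
lemma av_mult_less1: "av x \<le> 1 \<Longrightarrow> av y < B \<Longrightarrow> av (x * y) < B"
  by (simp add: av_mult) (metis av_nonneg le_less_trans mult_left_le_one_le)
lemma av_tri: "av (x - z) \<le> max (av (x - y)) (av (y - z))"
  using av_add[of "x - y" "y - z"] by simp

end



locale lf = vf +
  assumes lfd: "local_field av"
begin

abbreviation "Ov \<equiv> intring av"

lemma inO: "x \<in> Ov \<longleftrightarrow> av x \<le> 1" by (simp add: intring_def)

lemma O_0[simp]: "0 \<in> Ov" and O_1[simp]: "1 \<in> Ov" by (simp_all add: inO)
lemma O_add: "x \<in> Ov \<Longrightarrow> y \<in> Ov \<Longrightarrow> x + y \<in> Ov" by (simp add: inO av_add_le)
lemma O_diff: "x \<in> Ov \<Longrightarrow> y \<in> Ov \<Longrightarrow> x - y \<in> Ov" by (simp add: inO av_diff_le)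
lemma O_uminus: "x \<in> Ov \<Longrightarrow> - x \<in> Ov" by (simp add: inO)
lemma O_mult: "x \<in> Ov \<Longrightarrow> y \<in> Ov \<Longrightarrow> x * y \<in> Ov" by (simp add: inO av_mult_le1)
lemma O_power: "x \<in> Ov \<Longrightarrow> x ^ n \<in> Ov" by (induction n) (simp_all add: O_mult)
lemma O_sum: "(\<And>i. i \<in> A \<Longrightarrow> f i \<in> Ov) \<Longrightarrow> sum f A \<in> Ov"
  by (simp add: inO av_sum_le)
lemma O_prod: "(\<And>i. i \<in> A \<Longrightarrow> f i \<in> Ov) \<Longrightarrow> prod f A \<in> Ov"
  by (induction A rule: infinite_finite_induct) (simp_all add: O_mult)

lemma complete: fixes X :: "nat \<Rightarrow> 'a" assumes "(\<forall>\<epsilon>>0. \<exists>N. \<forall>m\<ge>N. \<forall>n\<ge>N. av (X m - X n) < \<epsilon>)" shows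
         "(\<exists>L. \<forall>\<epsilon>>0. \<exists>N. \<forall>n\<ge>N. av (X n - L) < \<epsilon>)"
proof -
  have "\<forall>X::nat \<Rightarrow> 'a. (\<forall>\<epsilon>>0. \<exists>N. \<forall>m\<ge>N. \<forall>n\<ge>N. av (X m - X n) < \<epsilon>) \<longrightarrow>
         (\<exists>L. \<forall>\<epsilon>>0. \<exists>N. \<forall>n\<ge>N. av (X n - L) < \<epsilon>)"
    using lfd unfolding local_field_def by blast
  then show ?thesis apply (elim allE[of _ X]) using assms by blast
qed

lemma finite_resfield: "finite (resfield av)"
  using lfd unfolding local_field_def by blast

lemma red_eq: "x \<in> Ov \<Longrightarrow> y \<in> Ov \<Longrightarrow> red av x = red av y \<longleftrightarrow> av (x - y) < 1"
proof
  assume "x \<in> Ov" "y \<in> Ov" "red av x = red av y"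
  then have "y \<in> red av x" by (auto simp: red_def)
  then show "av (x - y) < 1" by (simp add: red_def)
next
  assume xy: "av (x - y) < 1"
  show "red av x = red av y"
    unfolding red_def
  proof (intro Collect_cong conj_cong refl iffI)
    fix z assume "av (x - z) < 1" then show "av (y - z) < 1"
      using av_tri[of y z x] xy av_commute[of x y] by simp
  next
    fix z assume "av (y - z) < 1" then show "av (x - z) < 1"
      using av_tri[of x z y] xy by simp
  qed
qed

lemma uniformizer: "\<exists>p. 0 < av p \<and> av p < 1 \<and> (\<forall>y. av y < 1 \<longrightarrow> av y \<le> av p)"
proof -
  define V where "V = av ` (UNIV - {0})"
  have disc: "\<forall>t \<in> V. \<exists>\<epsilon>>0. \<forall>s \<in> V. \<bar>s - t\<bar> < \<epsilon> \<longrightarrow> s = t"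
    using lfd unfolding local_field_def V_def by blast
  have "1 \<in> V" unfolding V_def by (metis DiffI av_1 image_eqI iso_tuple_UNIV_I one_neq_zero singletonD)
  then obtain \<epsilon> where ep: "\<epsilon> > 0" "\<And>s. s \<in> V \<Longrightarrow> \<bar>s - 1\<bar> < \<epsilon> \<Longrightarrow> s = 1"
    using disc by blast
  obtain x where x: "x \<noteq> 0" "av x \<noteq> 1" using lfd unfolding local_field_def by blast
  obtain p0 where p0: "p0 \<noteq> 0" "av p0 < 1"
  proof (cases "av x < 1")
    case True then show ?thesis using that x by blast
  next
    case False
    then have "av x > 1" using x by simp
    then have "av (inverse x) < 1" by (simp add: av_inverse inverse_less_1_iff)
    then show ?thesis using that x by (metis inverse_zero_imp_zero)
  qed
  define a where "a = av p0"
  have a: "0 < a" "a < 1" using p0 av_pos a_def by auto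
  define T where "T = {s \<in> V. a \<le> s \<and> s < 1}"
  have sep: "\<epsilon> * a \<le> \<bar>s - t\<bar>" if st: "s \<in> T" "t \<in> T" "s \<noteq> t" for s t
  proof -
    obtain u w where uw: "u \<noteq> 0" "w \<noteq> 0" "s = av u" "t = av w"
    proof -
      have "s \<in> V" "t \<in> V" using st unfolding T_def by auto
      then show ?thesis unfolding V_def by (auto intro: that)
    qed
    have tpos: "t > 0" using uw av_pos by simp
    have "s / t \<in> V" unfolding V_def using uw by (auto simp: av_divide intro!: image_eqI[of _ _ "u / w"])
    moreover have "s / t \<noteq> 1" using st tpos by simp
    ultimately have "\<bar>s / t - 1\<bar> \<ge> \<epsilon>" using ep by force
    then have "\<bar>s - t\<bar> \<ge> \<epsilon> * t" using tpos
      by (metis abs_of_pos diff_divide_distrib divide_le_eq_1_pos  abs_divide divide_self_if less_irrefl mult.commute pos_le_divide_eq zero_less_abs_iff)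
    moreover have "\<epsilon> * t \<ge> \<epsilon> * a" using st(2) ep(1) unfolding T_def by simp
    ultimately show ?thesis by linarith
  qed
  have finT: "finite T"
  proof -
    define g where "g s = floor (s / (\<epsilon> * a))" for s
    have "inj_on g T"
    proof (rule inj_onI, rule ccontr)
      fix s t assume st: "s \<in> T" "t \<in> T" "g s = g t" "s \<noteq> t"
      have pos: "\<epsilon> * a > 0" using ep a by simp
      have "\<bar>s / (\<epsilon> * a) - t / (\<epsilon> * a)\<bar> < 1" using st(3) unfolding g_def by linarith
      then have "\<bar>s - t\<bar> < \<epsilon> * a" using pos
        by (simp add: diff_divide_distrib[symmetric] abs_divide divide_less_eq)
      then show False using sep[OF st(1,2,4)] by simp
    qed
    moreover have "g ` T \<subseteq> {0 .. floor (1 / (\<epsilon> * a))}"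
    proof
      fix z assume "z \<in> g ` T"
      then obtain s where s: "s \<in> T" "z = g s" by blast
      have pos: "\<epsilon> * a > 0" using ep a by simp
      have "0 \<le> s" "s \<le> 1" using s a unfolding T_def by auto
      then have "0 \<le> s / (\<epsilon> * a)" "s / (\<epsilon> * a) \<le> 1 / (\<epsilon> * a)" using pos
        by (simp_all add: divide_right_mono)
      then show "z \<in> {0 .. floor (1 / (\<epsilon> * a))}" using s unfolding g_def by (auto intro: floor_mono)
    qed
    ultimately show ?thesis by (metis finite_atLeastAtMost_int finite_imageD finite_subset)
  qed
  have "a \<in> T" unfolding T_def V_def a_def using p0 a a_def by auto
  then have ne: "T \<noteq> {}" by blast
  define m where "m = Max T"
  have mT: "m \<in> T" using finT ne m_def by simp
  then obtain p where p: "p \<noteq> 0" "m = av p" unfolding T_def V_def by auto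
  have "\<forall>y. av y < 1 \<longrightarrow> av y \<le> av p"
  proof (intro allI impI)
    fix y assume y: "av y < 1"
    show "av y \<le> av p"
    proof (cases "y = 0")
      case True then show ?thesis by simp
    next
      case False
      show ?thesis
      proof (cases "a \<le> av y")
        case True
        then have "av y \<in> T" unfolding T_def V_def using False y by auto
        then show ?thesis using finT m_def p by simp
      next
        case False
        then show ?thesis using mT p unfolding T_def by auto
      qed
    qed
  qed
  moreover have "a \<le> av p" "av p < 1" using mT p unfolding T_def by auto
  ultimately show ?thesis using a by (intro exI[of _ p]) auto
qed

end



context lf
begin

definition "unif = (SOME p. 0 < av p \<and> av p < 1 \<and> (\<forall>y. av y < 1 \<longrightarrow> av y \<le> av p))"
abbreviation "\<rho> \<equiv> av unif"

lemma unif: "0 < \<rho>" "\<rho> < 1" "av y < 1 \<Longrightarrow> av y \<le> \<rho>"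
  using someI_ex[OF uniformizer] unfolding unif_def[symmetric] by blast+

lemma unif_ne0: "unif \<noteq> 0" using unif(1) by auto

lemma red_in: "x \<in> Ov \<Longrightarrow> red av x \<in> resfield av" by (simp add: resfield_def)

lemma refine:
  fixes X :: "nat \<Rightarrow> 'a"
  assumes X: "\<forall>n. X n \<in> Ov" and S: "infinite S" "\<forall>n\<in>S. \<forall>m\<in>S. av (X n - X m) \<le> \<rho> ^ k"
  shows "\<exists>S'. S' \<subseteq> S \<and> infinite S' \<and> (\<forall>n\<in>S'. \<forall>m\<in>S'. av (X n - X m) \<le> \<rho> ^ Suc k)"
proof -
  obtain n0 where n0: "n0 \<in> S" using S(1) by (metis finite.emptyI ex_in_conv)
  define y where "y n = (X n - X n0) / unif ^ k" for n
  have pk: "\<rho> ^ k > 0" using unif(1) by simp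
  have yO: "y n \<in> Ov" if "n \<in> S" for n
    using S(2) that n0 pk unfolding y_def inO by (simp add: av_divide av_power)
  define g where "g n = red av (y n)" for n
  have "g ` S \<subseteq> resfield av" using yO red_in g_def by auto
  then have "finite (g ` S)" using finite_resfield finite_subset by blast
  then obtain a0 where a0: "a0 \<in> S" "infinite {a \<in> S. g a = g a0}"
    using pigeonhole_infinite[OF S(1)] by blast
  show ?thesis
  proof (intro exI conjI ballI)
    show "{a \<in> S. g a = g a0} \<subseteq> S" by blast
    show "infinite {a \<in> S. g a = g a0}" by (rule a0(2))
    fix n m assume nm: "n \<in> {a \<in> S. g a = g a0}" "m \<in> {a \<in> S. g a = g a0}"
    then have "red av (y n) = red av (y m)" unfolding g_def by simp
    then have "av (y n - y m) < 1" using red_eq yO nm by blast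
    then have "av (y n - y m) \<le> \<rho>" using unif(3) by blast
    moreover have "y n - y m = (X n - X m) / unif ^ k" unfolding y_def by (simp add: diff_divide_distrib)
    ultimately have "av (X n - X m) / \<rho> ^ k \<le> \<rho>" by (simp add: av_divide av_power)
    then show "av (X n - X m) \<le> \<rho> ^ Suc k" using pk by (simp add: divide_le_eq mult.commute)
  qed
qed

lemma seq_compact:
  fixes X :: "nat \<Rightarrow> 'a"
  assumes X: "\<forall>n. X n \<in> Ov"
  shows "\<exists>(r::nat\<Rightarrow>nat) L. strict_mono r \<and> L \<in> Ov \<and> (\<forall>\<epsilon>>0. \<exists>N. \<forall>k\<ge>N. av (X (r k) - L) < \<epsilon>)"
proof -
  define P where "P k S \<longleftrightarrow> infinite S \<and> (\<forall>n\<in>S. \<forall>m\<in>S. av (X n - X m) \<le> \<rho> ^ k)" for k S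
  define S where "S = rec_nat UNIV (\<lambda>k T. SOME S'. S' \<subseteq> T \<and> P (Suc k) S')"
  have S0: "S 0 = UNIV" and SS: "S (Suc k) = (SOME S'. S' \<subseteq> S k \<and> P (Suc k) S')" for k
    unfolding S_def by simp_all
  have PS: "P k (S k) \<and> S (Suc k) \<subseteq> S k" for k
  proof (induction k)
    case 0
    have "P 0 (S 0)" unfolding P_def S0 using X by (simp add: inO av_diff_le infinite_UNIV_nat)
    then have ex: "\<exists>S'. S' \<subseteq> S 0 \<and> P (Suc 0) S'" using refine[OF X] unfolding P_def by blast
    show ?case using someI_ex[OF ex] \<open>P 0 (S 0)\<close> unfolding SS by blast
  next
    case (Suc k)
    then have exk: "\<exists>S'. S' \<subseteq> S k \<and> P (Suc k) S'" using refine[OF X] unfolding P_def by blast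
    have "P (Suc k) (S (Suc k))" using someI_ex[OF exk] unfolding SS[of k] by blast
    then have ex: "\<exists>S'. S' \<subseteq> S (Suc k) \<and> P (Suc (Suc k)) S'" using refine[OF X] unfolding P_def by blast
    show ?case using someI_ex[OF ex] \<open>P (Suc k) (S (Suc k))\<close> unfolding SS[of "Suc k"] by blast
  qed
  have Smono: "S l \<subseteq> S k" if "k \<le> l" for k l
    using that by (induction l rule: dec_induct) (use PS in blast)+
  have unb: "\<exists>n\<in>S k. b < n" for k b
    using PS[of k] unfolding P_def infinite_nat_iff_unbounded by blast
  define r where "r = rec_nat (LEAST n. n \<in> S 0) (\<lambda>k rk. LEAST n. n \<in> S (Suc k) \<and> rk < n)"
  have r0: "r 0 = (LEAST n. n \<in> S 0)" and rS: "r (Suc k) = (LEAST n. n \<in> S (Suc k) \<and> r k < n)" for k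
    unfolding r_def by simp_all
  have rprop: "r k \<in> S k \<and> r k < r (Suc k)" for k
  proof -
    have 1: "r (Suc k) \<in> S (Suc k) \<and> r k < r (Suc k)"
      unfolding rS using unb[of "Suc k" "r k"] by (metis (mono_tags, lifting) LeastI)
    have "r k \<in> S k"
    proof (cases k)
      case 0 then show ?thesis using r0 S0 by simp
    next
      case (Suc k')
      have "r (Suc k') \<in> S (Suc k') \<and> r k' < r (Suc k')"
        unfolding rS using unb[of "Suc k'" "r k'"] by (metis (mono_tags, lifting) LeastI)
      then show ?thesis using Suc by simp
    qed
    then show ?thesis using 1 by blast
  qed
  have sm: "strict_mono r" using rprop by (simp add: strict_mono_Suc_iff)
  have cau: "av (X (r k) - X (r l)) \<le> \<rho> ^ k" if "k \<le> l" for k l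
  proof -
    have "r k \<in> S k" "r l \<in> S k" using rprop Smono[OF that] by blast+
    then show ?thesis using PS[of k] unfolding P_def by blast
  qed
  have "\<forall>\<epsilon>>0. \<exists>N. \<forall>m\<ge>N. \<forall>n\<ge>N. av (X (r m) - X (r n)) < \<epsilon>"
  proof (intro allI impI)
    fix \<epsilon> :: real assume "\<epsilon> > 0"
    then obtain K where K: "\<rho> ^ K < \<epsilon>" using real_arch_pow_inv unif by blast
    show "\<exists>N. \<forall>m\<ge>N. \<forall>n\<ge>N. av (X (r m) - X (r n)) < \<epsilon>"
    proof (intro exI allI impI)
      fix m n assume mn: "K \<le> m" "K \<le> n"
      have pm: "\<rho> ^ m \<le> \<rho> ^ K" "\<rho> ^ n \<le> \<rho> ^ K" using mn unif by (simp_all add: power_decreasing)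
      show "av (X (r m) - X (r n)) < \<epsilon>"
      proof (cases "m \<le> n")
        case True then show ?thesis using cau[OF True] pm K by linarith
      next
        case False then show ?thesis using cau[of n m] pm K av_commute by (metis le_cases order.trans le_less_trans)
      qed
    qed
  qed
  then obtain L where L: "\<forall>\<epsilon>>0. \<exists>N. \<forall>n\<ge>N. av (X (r n) - L) < \<epsilon>" using complete[of "X o r"] by auto
  have "L \<in> Ov"
  proof -
    obtain N where "\<forall>n\<ge>N. av (X (r n) - L) < 1" using L by (meson zero_less_one)
    then have "av (X (r N) - L) < 1" by simp
    moreover have "av (X (r N)) \<le> 1" using X inO by blast
    ultimately have "av (X (r N) - (X (r N) - L)) \<le> 1" using av_diff_le[of "X (r N)" 1 "X (r N) - L"] by linarith
    then show ?thesis by (simp add: inO)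
  qed
  then show ?thesis using sm L by blast
qed

end


context lf
begin

lemma cont_const: "cont_O av (\<lambda>x. c)"
  unfolding cont_O_def by (auto intro: exI[of _ 1])

lemma cont_add:
  assumes "cont_O av f" "cont_O av g" shows "cont_O av (\<lambda>x. f x + g x)"
  unfolding cont_O_def
proof (intro ballI allI impI)
  fix x and \<epsilon> :: real assume x: "x \<in> Ov" and e: "\<epsilon> > 0"
  obtain d1 where d1: "d1 > 0" "\<forall>y\<in>Ov. av (y - x) < d1 \<longrightarrow> av (f y - f x) < \<epsilon>"
    using assms(1) x e unfolding cont_O_def by blast
  obtain d2 where d2: "d2 > 0" "\<forall>y\<in>Ov. av (y - x) < d2 \<longrightarrow> av (g y - g x) < \<epsilon>"
    using assms(2) x e unfolding cont_O_def by blast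
  show "\<exists>\<delta>>0. \<forall>y\<in>Ov. av (y - x) < \<delta> \<longrightarrow> av (f y + g y - (f x + g x)) < \<epsilon>"
  proof (intro exI[of _ "min d1 d2"] conjI ballI impI)
    fix y assume "y \<in> Ov" "av (y - x) < min d1 d2"
    then have "av (f y - f x) < \<epsilon>" "av (g y - g x) < \<epsilon>" using d1 d2 by auto
    then have "av ((f y - f x) + (g y - g x)) < \<epsilon>" by (rule av_add_less)
    then show "av (f y + g y - (f x + g x)) < \<epsilon>" by (simp add: algebra_simps)
  qed (use d1 d2 in auto)
qed

lemma cont_cmult:
  assumes "cont_O av f" shows "cont_O av (\<lambda>x. c * f x)"
proof (cases "c = 0")
  case True then show ?thesis using cont_const by simp
next
  case False
  then have cp: "av c > 0" using av_pos by blast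
  show ?thesis unfolding cont_O_def
  proof (intro ballI allI impI)
    fix x and \<epsilon> :: real assume x: "x \<in> Ov" and e: "\<epsilon> > 0"
    then have "\<epsilon> / av c > 0" using cp by simp
    then obtain d where d: "d > 0" "\<forall>y\<in>Ov. av (y - x) < d \<longrightarrow> av (f y - f x) < \<epsilon> / av c"
      using assms x unfolding cont_O_def by blast
    show "\<exists>\<delta>>0. \<forall>y\<in>Ov. av (y - x) < \<delta> \<longrightarrow> av (c * f y - c * f x) < \<epsilon>"
    proof (intro exI[of _ d] conjI ballI impI)
      fix y assume "y \<in> Ov" "av (y - x) < d"
      then have "av (f y - f x) < \<epsilon> / av c" using d by auto
      then have "av c * av (f y - f x) < \<epsilon>" using cp by (simp add: field_simps)
      then show "av (c * f y - c * f x) < \<epsilon>" by (simp add: av_mult[symmetric] right_diff_distrib)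
    qed (use d in auto)
  qed
qed

lemma cont_uminus: "cont_O av f \<Longrightarrow> cont_O av (\<lambda>x. - f x)"
  using cont_cmult[of f "-1"] by simp

lemma cont_diff: "cont_O av f \<Longrightarrow> cont_O av g \<Longrightarrow> cont_O av (\<lambda>x. f x - g x)"
  using cont_add[of f "\<lambda>x. - g x"] cont_uminus[of g] by simp

lemma cont_mult_O:
  assumes "cont_O av f" "cont_O av g" "\<forall>x\<in>Ov. f x \<in> Ov" "\<forall>x\<in>Ov. g x \<in> Ov"
  shows "cont_O av (\<lambda>x. f x * g x)"
  unfolding cont_O_def
proof (intro ballI allI impI)
  fix x and \<epsilon> :: real assume x: "x \<in> Ov" and e: "\<epsilon> > 0"
  obtain d1 where d1: "d1 > 0" "\<forall>y\<in>Ov. av (y - x) < d1 \<longrightarrow> av (f y - f x) < \<epsilon>"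
    using assms(1) x e unfolding cont_O_def by blast
  obtain d2 where d2: "d2 > 0" "\<forall>y\<in>Ov. av (y - x) < d2 \<longrightarrow> av (g y - g x) < \<epsilon>"
    using assms(2) x e unfolding cont_O_def by blast
  show "\<exists>\<delta>>0. \<forall>y\<in>Ov. av (y - x) < \<delta> \<longrightarrow> av (f y * g y - f x * g x) < \<epsilon>"
  proof (intro exI[of _ "min d1 d2"] conjI ballI impI)
    fix y assume y: "y \<in> Ov" "av (y - x) < min d1 d2"
    then have "av (f y - f x) < \<epsilon>" "av (g y - g x) < \<epsilon>" using d1 d2 by auto
    moreover have "av (f y) \<le> 1" "av (g x) \<le> 1" using assms(3,4) x y inO by auto
    ultimately have "av (f y * (g y - g x)) < \<epsilon>" "av (g x * (f y - f x)) < \<epsilon>"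
      by (auto intro: av_mult_less1)
    then have "av (f y * (g y - g x) + g x * (f y - f x)) < \<epsilon>" by (rule av_add_less)
    then show "av (f y * g y - f x * g x) < \<epsilon>" by (simp add: algebra_simps)
  qed (use d1 d2 in auto)
qed

lemma cont_sum:
  "(\<And>i. i \<in> A \<Longrightarrow> cont_O av (f i)) \<Longrightarrow> cont_O av (\<lambda>x. \<Sum>i\<in>A. f i x)"
proof (induction A rule: infinite_finite_induct)
  case (infinite A) then show ?case using cont_const by simp
next
  case empty then show ?case using cont_const by simp
next
  case (insert a A) then show ?case using cont_add[of "f a" "\<lambda>x. \<Sum>i\<in>A. f i x"] by simp
qed

lemma cont_prod_O:
  "(\<And>i. i \<in> A \<Longrightarrow> cont_O av (f i)) \<Longrightarrow> (\<And>i x. i \<in> A \<Longrightarrow> x \<in> Ov \<Longrightarrow> f i x \<in> Ov)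
   \<Longrightarrow> cont_O av (\<lambda>x. \<Prod>i\<in>A. f i x)"
proof (induction A rule: infinite_finite_induct)
  case (infinite A) then show ?case using cont_const by simp
next
  case empty then show ?case using cont_const by simp
next
  case (insert a A)
  have "cont_O av (\<lambda>x. f a x * (\<Prod>i\<in>A. f i x))"
    by (rule cont_mult_O) (use insert in \<open>auto intro!: O_prod\<close>)
  then show ?case using insert by simp
qed

lemma cont_power_O:
  assumes "cont_O av f" "\<forall>x\<in>Ov. f x \<in> Ov" shows "cont_O av (\<lambda>x. f x ^ n)"
  using cont_prod_O[of "{..<n}" "\<lambda>_. f"] assms by simp

lemma cont_bounded:
  assumes f: "cont_O av f" shows "\<exists>B. \<forall>x\<in>Ov. av (f x) \<le> B"
proof (rule ccontr)
  assume "\<not> ?thesis"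
  then have "\<forall>n::nat. \<exists>x\<in>Ov. av (f x) > real n" by (meson not_le)
  then obtain X where X: "\<forall>n. X n \<in> Ov \<and> av (f (X n)) > real n" by metis
  have X': "\<forall>n. X n \<in> Ov" using X by blast
  obtain r :: "nat \<Rightarrow> nat" and L where rL: "strict_mono r" "L \<in> Ov" "\<forall>\<epsilon>>0. \<exists>N. \<forall>k\<ge>N. av (X (r k) - L) < \<epsilon>"
    using seq_compact[OF X'] by blast
  obtain d where d: "d > 0" "\<forall>y\<in>Ov. av (y - L) < d \<longrightarrow> av (f y - f L) < 1"
    using f rL(2) unfolding cont_O_def by (meson zero_less_one)
  obtain N where N: "\<forall>k\<ge>N. av (X (r k) - L) < d" using rL(3) d(1) by blast
  define k where "k = max N (nat \<lceil>max 1 (av (f L))\<rceil>)"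
  have "av (f (X (r k)) - f L) < 1" using d N X k_def by auto
  then have "av (f (X (r k)) - f L + f L) \<le> max 1 (av (f L))" using av_add[of "f (X (r k)) - f L" "f L"] by simp
  then have le: "av (f (X (r k))) \<le> max 1 (av (f L))" by simp
  have "real k \<le> real (r k)" using seq_suble[OF rL(1)] by simp
  moreover have "max 1 (av (f L)) \<le> real k" unfolding k_def by linarith
  ultimately show False using le X by (metis leD order.trans less_le_not_le)
qed

lemma cont_unif:
  assumes f: "cont_O av f" and e: "\<epsilon> > 0"
  shows "\<exists>\<delta>>0. \<forall>x\<in>Ov. \<forall>y\<in>Ov. av (x - y) < \<delta> \<longrightarrow> av (f x - f y) < \<epsilon>"
proof (rule ccontr)
  assume "\<not> ?thesis"
  then have "\<forall>n::nat. \<exists>x\<in>Ov. \<exists>y\<in>Ov. av (x - y) < 1 / (real n + 1) \<and> \<not> av (f x - f y) < \<epsilon>"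
    by (metis divide_pos_pos of_nat_0_le_iff zero_less_one add_nonneg_pos)
  then obtain X Y where XY: "\<forall>n. X n \<in> Ov \<and> Y n \<in> Ov \<and> av (X n - Y n) < 1 / (real n + 1) \<and> \<not> av (f (X n) - f (Y n)) < \<epsilon>"
    by metis
  have X': "\<forall>n. X n \<in> Ov" using XY by blast
  obtain r :: "nat \<Rightarrow> nat" and L where rL: "strict_mono r" "L \<in> Ov" "\<forall>\<epsilon>>0. \<exists>N. \<forall>k\<ge>N. av (X (r k) - L) < \<epsilon>"
    using seq_compact[OF X'] by blast
  obtain d where d: "d > 0" "\<forall>y\<in>Ov. av (y - L) < d \<longrightarrow> av (f y - f L) < \<epsilon>"
    using f rL(2) e unfolding cont_O_def by blast
  obtain N where N: "\<forall>k\<ge>N. av (X (r k) - L) < d" using rL(3) d(1) by blast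
  define k where "k = max N (nat \<lceil>1 / d\<rceil>)"
  have xk: "av (X (r k) - L) < d" using N k_def by auto
  have "real k \<le> real (r k)" using seq_suble[OF rL(1)] by simp
  moreover have "1 / d \<le> real k" unfolding k_def by linarith
  ultimately have "1 / (real (r k) + 1) < d" using d(1)
    by (smt (verit, ccfv_SIG) divide_less_eq divide_pos_pos le_divide_eq_1_pos mult.commute)
  then have "av (X (r k) - Y (r k)) < d" using XY by (meson less_trans)
  then have yk: "av (Y (r k) - L) < d" using xk av_tri[of "Y (r k)" L "X (r k)"] av_commute[of "X (r k)" "Y (r k)"] by simp
  have "av (f (X (r k)) - f L) < \<epsilon>" "av (f (Y (r k)) - f L) < \<epsilon>" using d xk yk XY by auto
  then have "av (f (X (r k)) - f (Y (r k))) < \<epsilon>"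
    using av_tri[of "f (X (r k))" "f (Y (r k))" "f L"] av_commute[of "f (Y (r k))" "f L"] by simp
  then show False using XY by blast
qed

end


locale setting = lf +
  fixes H :: "nat \<Rightarrow> 'a set" and e :: "nat \<Rightarrow> 'a \<Rightarrow> 'a"
  assumes H_open: "\<forall>n\<ge>1. open_subgroup_O av (H n)"
    and H_dec: "\<forall>n\<ge>1. H (Suc n) \<subseteq> H n"
    and H_int: "(\<Inter>n\<in>{1..}. H n) = {0}"
    and e_cont: "\<forall>j. cont_O av (e j)"
    and e_O: "\<forall>j. \<forall>x \<in> intring av. e j x \<in> intring av"
    and e_H: "\<forall>n\<ge>1. \<forall>j<n. \<forall>x \<in> intring av. \<forall>y \<in> intring av.
           x - y \<in> H n \<longrightarrow> red av (e j x) = red av (e j y)"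
    and e_bij: "\<forall>n\<ge>1. bij_betw (induced_map av e n) (cosets_O av (H n))
                         (PiE {..<n} (\<lambda>_. resfield av))"
begin

lemma H_sub: "n \<ge> 1 \<Longrightarrow> H n \<subseteq> Ov" using H_open unfolding open_subgroup_O_def by blast
lemma H_0: "n \<ge> 1 \<Longrightarrow> 0 \<in> H n" using H_open unfolding open_subgroup_O_def by blast
lemma H_add: "n \<ge> 1 \<Longrightarrow> x \<in> H n \<Longrightarrow> y \<in> H n \<Longrightarrow> x + y \<in> H n"
  using H_open unfolding open_subgroup_O_def by blast
lemma H_uminus: "n \<ge> 1 \<Longrightarrow> x \<in> H n \<Longrightarrow> - x \<in> H n"
  using H_open unfolding open_subgroup_O_def by blast
lemma H_diff: "n \<ge> 1 \<Longrightarrow> x \<in> H n \<Longrightarrow> y \<in> H n \<Longrightarrow> x - y \<in> H n"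
  using H_add[of n x "-y"] H_uminus[of n y] by simp
lemma H_nbhd: "n \<ge> 1 \<Longrightarrow> \<exists>r>0. \<forall>y\<in>Ov. av y < r \<longrightarrow> y \<in> H n"
  using H_open H_0[of n] unfolding open_subgroup_O_def by (metis diff_zero)
lemma H_mono: assumes "1 \<le> m" "m \<le> n" shows "H n \<subseteq> H m"
proof -
  obtain k where k: "n = m + k" using assms(2) le_Suc_ex by blast
  have "H (m + k) \<subseteq> H m" for k
  proof (induction k)
    case (Suc k) then show ?case using H_dec assms(1) by (metis add_Suc_right le_add1 order.trans)
  qed simp
  then show ?thesis using k by simp
qed

lemma H_small:
  assumes d: "\<delta> > 0" shows "\<exists>n\<ge>1. \<forall>h\<in>H n. av h < \<delta>"
proof (rule ccontr)
  assume "\<not> ?thesis"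
  then have "\<forall>n. \<exists>h\<in>H (Suc n). \<not> av h < \<delta>" by (metis le_add1 plus_1_eq_Suc)
  then obtain X where X: "\<forall>n. X n \<in> H (Suc n) \<and> \<not> av (X n) < \<delta>" by metis
  have X': "\<forall>n. X n \<in> Ov"
  proof
    fix n have "X n \<in> H (Suc n)" using X by blast
    moreover have "H (Suc n) \<subseteq> Ov" by (rule H_sub) simp
    ultimately show "X n \<in> Ov" by blast
  qed
  obtain r :: "nat \<Rightarrow> nat" and L where rL: "strict_mono r" "L \<in> Ov" "\<forall>\<epsilon>>0. \<exists>N. \<forall>k\<ge>N. av (X (r k) - L) < \<epsilon>"
    using seq_compact[OF X'] by blast
  have "L \<in> H m" if m: "m \<ge> 1" for m
  proof -
    obtain \<rho>' where rr: "\<rho>' > 0" "\<forall>y\<in>Ov. av y < \<rho>' \<longrightarrow> y \<in> H m" using H_nbhd[OF m] by blast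
    obtain N where N: "\<forall>k\<ge>N. av (X (r k) - L) < \<rho>'" using rL(3) rr(1) by blast
    define k where "k = max N m"
    have "av (X (r k) - L) < \<rho>'" using N k_def by simp
    then have "L - X (r k) \<in> H m" using rr X' rL(2) O_diff av_commute by metis
    moreover have "X (r k) \<in> H m"
    proof -
      have "m \<le> Suc (r k)" using seq_suble[OF rL(1), of k] k_def by simp
      then show ?thesis using X H_mono[OF m] by blast
    qed
    ultimately have "X (r k) + (L - X (r k)) \<in> H m" using H_add m by blast
    then show ?thesis by simp
  qed
  then have "L \<in> (\<Inter>n\<in>{1..}. H n)" by auto
  then have L0: "L = 0" using H_int by blast
  obtain N where N: "\<forall>k\<ge>N. av (X (r k) - L) < \<delta>" using rL(3) d by blast
  then show False using X L0 by auto
qed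

lemma cont_H:
  assumes f: "cont_O av f" and e: "\<epsilon> > 0"
  shows "\<exists>n\<ge>1. \<forall>x\<in>Ov. \<forall>y\<in>Ov. x - y \<in> H n \<longrightarrow> av (f x - f y) < \<epsilon>"
proof -
  obtain d where d: "d > 0" "\<forall>x\<in>Ov. \<forall>y\<in>Ov. av (x - y) < d \<longrightarrow> av (f x - f y) < \<epsilon>"
    using cont_unif[OF f e] by blast
  obtain n where "n \<ge> 1" "\<forall>h\<in>H n. av h < d" using H_small[OF d(1)] by blast
  then show ?thesis using d by blast
qed

end


lemma inj_some_disjoint:
  assumes "\<And>C. C \<in> Q \<Longrightarrow> C \<noteq> {}" "\<And>C D. C \<in> Q \<Longrightarrow> D \<in> Q \<Longrightarrow> C \<inter> D \<noteq> {} \<Longrightarrow> C = D"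
  shows "inj_on (\<lambda>C. SOME y. y \<in> C) Q"
proof (rule inj_onI)
  fix C D assume CD: "C \<in> Q" "D \<in> Q" "(SOME y. y \<in> C) = (SOME y. y \<in> D)"
  have c1: "(SOME y. y \<in> C) \<in> C" using assms(1)[OF CD(1)] by (simp add: some_in_eq)
  have "(SOME y. y \<in> D) \<in> D" using assms(1)[OF CD(2)] by (simp add: some_in_eq)
  then have "(SOME y. y \<in> C) \<in> C \<inter> D" using c1 CD(3) by simp
  then show "C = D" using assms(2)[OF CD(1,2)] by blast
qed

context lf
begin

abbreviation "q \<equiv> card (resfield av)"

definition "rep x = (SOME y. y \<in> red av x)"
definition "Rs = rep ` Ov"

lemma rep: assumes "x \<in> Ov" shows "rep x \<in> Ov" "av (x - rep x) < 1"
proof -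
  have "x \<in> red av x" using assms by (simp add: red_def)
  then have "rep x \<in> red av x" unfolding rep_def by (metis someI)
  then show "rep x \<in> Ov" "av (x - rep x) < 1" by (simp_all add: red_def)
qed

lemma rep_cong: "x \<in> Ov \<Longrightarrow> y \<in> Ov \<Longrightarrow> av (x - y) < 1 \<Longrightarrow> rep x = rep y"
  unfolding rep_def using red_eq by metis

lemma rep_eq_iff: assumes "x \<in> Ov" "y \<in> Ov" shows "rep x = rep y \<longleftrightarrow> av (x - y) < 1"
proof
  assume "rep x = rep y"
  then have "av (rep x - y) < 1" using rep(2)[OF assms(2)] av_commute[of y "rep y"] by simp
  then show "av (x - y) < 1" using rep(2)[OF assms(1)] av_tri[of x y "rep x"] by simp
qed (rule rep_cong[OF assms])

lemma Rs_O: "a \<in> Rs \<Longrightarrow> a \<in> Ov" using rep unfolding Rs_def by auto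
lemma rep_Rs: assumes "a \<in> Rs" shows "rep a = a"
proof -
  obtain x where x: "x \<in> Ov" "a = rep x" using assms unfolding Rs_def by blast
  have "av (rep x - x) < 1" using rep(2)[OF x(1)] av_commute[of x "rep x"] by simp
  then show ?thesis using rep_cong[of "rep x" x] rep(1)[OF x(1)] x by simp
qed
lemma rep_in_Rs: "x \<in> Ov \<Longrightarrow> rep x \<in> Rs" unfolding Rs_def by simp
lemma Rs_sep: "a \<in> Rs \<Longrightarrow> b \<in> Rs \<Longrightarrow> a \<noteq> b \<Longrightarrow> av (a - b) = 1"
proof -
  assume ab: "a \<in> Rs" "b \<in> Rs" "a \<noteq> b"
  then have "\<not> av (a - b) < 1" using rep_cong[of a b] Rs_O rep_Rs by force
  moreover have "av (a - b) \<le> 1" using ab Rs_O O_diff inO by blast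
  ultimately show ?thesis by simp
qed

lemma card_Rs: "card Rs = q"
proof -
  define g where "g C = (SOME y. y \<in> C)" for C :: "'a set"
  have "inj_on g (resfield av)" unfolding g_def
  proof (rule inj_some_disjoint)
    fix C assume "C \<in> resfield av"
    then obtain x where "x \<in> Ov" "C = red av x" unfolding resfield_def by blast
    then show "C \<noteq> {}" by (auto simp: red_def)
  next
    fix C D assume "C \<in> resfield av" "D \<in> resfield av" "C \<inter> D \<noteq> {}"
    then obtain x y z where "x \<in> Ov" "y \<in> Ov" "C = red av x" "D = red av y" "z \<in> red av x" "z \<in> red av y"
      unfolding resfield_def by blast
    then have zz: "z \<in> Ov" "av (x - z) < 1" "av (y - z) < 1" by (auto simp: red_def)
    then have "red av x = red av z" "red av y = red av z" using red_eq \<open>x \<in> Ov\<close> \<open>y \<in> Ov\<close> by auto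
    then show "C = D" using \<open>C = red av x\<close> \<open>D = red av y\<close> by simp
  qed
  moreover have "Rs = g ` resfield av" unfolding Rs_def resfield_def g_def rep_def by auto
  ultimately show ?thesis by (simp add: card_image)
qed

lemma finite_Rs: "finite Rs" unfolding Rs_def
proof -
  have "rep ` Ov = (\<lambda>C. SOME y. y \<in> C) ` resfield av" unfolding resfield_def rep_def by auto
  then show "finite (rep ` Ov)" using finite_resfield by simp
qed

lemma q_ge2: "q \<ge> 2"
proof -
  have "rep 0 \<noteq> rep 1" using rep_eq_iff[of 0 1] by simp
  moreover have "rep 0 \<in> Rs" "rep 1 \<in> Rs" by (simp_all add: rep_in_Rs)
  ultimately have "card {rep 0, rep 1} \<le> card Rs" using finite_Rs by (intro card_mono) auto
  then show ?thesis using card_Rs \<open>rep 0 \<noteq> rep 1\<close> by simp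
qed

end


context lf
begin

lemma prod_cong_O:
  "(\<And>i. i \<in> A \<Longrightarrow> x i \<in> Ov \<and> y i \<in> Ov \<and> av (x i - y i) < 1) \<Longrightarrow> av (prod x A - prod y A) < 1"
proof (induction A rule: infinite_finite_induct)
  case (insert a A)
  have h: "x a \<in> Ov" "y a \<in> Ov" "av (x a - y a) < 1" using insert by auto
  have pO: "prod y A \<in> Ov" using insert by (auto intro!: O_prod)
  have "av (x a * (prod x A - prod y A)) < 1" using insert h inO by (intro av_mult_less1) auto
  moreover have "av ((x a - y a) * prod y A) < 1" using h pO inO
    by (metis av_mult_less1 mult.commute)
  ultimately have "av (x a * (prod x A - prod y A) + (x a - y a) * prod y A) < 1" by (rule av_add_less)
  then show ?case using insert by (simp add: algebra_simps)
qed simp_all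

lemma prod_small_O:
  assumes "finite A" "b \<in> A" "\<And>i. i \<in> A \<Longrightarrow> x i \<in> Ov"
  shows "av (prod x A) \<le> av (x b)"
proof -
  have "prod x A = x b * prod x (A - {b})" using assms by (simp add: prod.remove)
  moreover have "prod x (A - {b}) \<in> Ov" using assms by (intro O_prod) auto
  then have "av (prod x (A - {b})) \<le> 1" by (simp add: inO)
  ultimately show ?thesis by (simp add: av_mult mult_left_le)
qed

lemma coeff_O_mult:
  assumes "\<forall>k. coeff p k \<in> Ov" "\<forall>k. coeff r k \<in> Ov" shows "\<forall>k. coeff (p * r) k \<in> Ov"
  using assms by (simp add: coeff_mult O_sum O_mult)

lemma coeff_O_prod:
  "(\<And>b. b \<in> A \<Longrightarrow> \<forall>k. coeff (P b) k \<in> Ov) \<Longrightarrow> \<forall>k. coeff (prod P A) k \<in> Ov"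
proof (induction A rule: infinite_finite_induct)
  case (insert a A) then show ?case using coeff_O_mult[of "P a" "prod P A"] by simp
qed (simp_all add: coeff_1)

definition "lag a = smult (inverse (\<Prod>b\<in>Rs-{a}. (a - b))) (\<Prod>b\<in>Rs-{a}. [:-b, 1:])"

lemma av_lagc: "a \<in> Rs \<Longrightarrow> av (\<Prod>b\<in>Rs-{a}. (a - b)) = 1"
  unfolding av_prod by (rule prod.neutral) (auto intro: Rs_sep)

lemma lag_coeff_O: assumes a: "a \<in> Rs" shows "coeff (lag a) k \<in> Ov"
proof -
  have "\<forall>k. coeff (\<Prod>b\<in>Rs-{a}. [:-b, 1:]) k \<in> Ov"
  proof (rule coeff_O_prod)
    fix b assume "b \<in> Rs - {a}"
    then have "b \<in> Ov" using Rs_O by blast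
    then show "\<forall>k. coeff [:-b, 1:] k \<in> Ov"
      by (auto simp: coeff_pCons O_uminus split: nat.split)
  qed
  moreover have "inverse (\<Prod>b\<in>Rs-{a}. (a - b)) \<in> Ov" using av_lagc[OF a] by (simp add: inO av_inverse)
  ultimately show ?thesis unfolding lag_def by (simp add: O_mult)
qed

lemma lag_degree: assumes a: "a \<in> Rs" shows "degree (lag a) < q"
proof -
  have "degree (lag a) \<le> degree (\<Prod>b\<in>Rs-{a}. [:-b, 1:])" unfolding lag_def by (rule degree_smult_le)
  also have "\<dots> \<le> sum (degree \<circ> (\<lambda>b. [:-b, 1:])) (Rs - {a})"
    by (rule degree_prod_sum_le) (simp add: finite_Rs)
  also have "\<dots> = card (Rs - {a})" by simp
  also have "\<dots> < q" using a card_Rs finite_Rs q_ge2 by (simp add: card_Diff_singleton)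
  finally show ?thesis .
qed

lemma lag_expand: assumes a: "a \<in> Rs" shows "poly (lag a) t = (\<Sum>k<q. coeff (lag a) k * t ^ k)"
proof -
  have "poly (lag a) t = (\<Sum>k\<le>degree (lag a). coeff (lag a) k * t ^ k)" by (rule poly_altdef)
  also have "\<dots> = (\<Sum>k<q. coeff (lag a) k * t ^ k)"
  proof (rule sum.mono_neutral_left)
    show "{..degree (lag a)} \<subseteq> {..<q}" using lag_degree[OF a] by auto
  qed (auto simp: coeff_eq_0)
  finally show ?thesis .
qed

lemma lag_eval:
  assumes a: "a \<in> Rs" and t: "t \<in> Ov"
  shows "av (poly (lag a) t - (if av (t - a) < 1 then 1 else 0)) < 1"
proof -
  define P where "P = (\<Prod>b\<in>Rs-{a}. (a - b))"
  have P1: "av P = 1" using av_lagc[OF a] P_def by simp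
  then have Pne: "P \<noteq> 0" by auto
  have pl: "poly (lag a) t = inverse P * (\<Prod>b\<in>Rs-{a}. (t - b))"
    unfolding lag_def P_def by (simp add: poly_prod)
  show ?thesis
  proof (cases "av (t - a) < 1")
    case True
    have "av ((\<Prod>b\<in>Rs-{a}. (t - b)) - P) < 1" unfolding P_def
    proof (rule prod_cong_O)
      fix b assume "b \<in> Rs - {a}"
      then have "b \<in> Ov" using Rs_O by blast
      then show "t - b \<in> Ov \<and> a - b \<in> Ov \<and> av (t - b - (a - b)) < 1"
        using True t a Rs_O O_diff by auto
    qed
    moreover have "poly (lag a) t - 1 = inverse P * ((\<Prod>b\<in>Rs-{a}. (t - b)) - P)"
      using pl Pne by (simp add: field_simps)
    ultimately show ?thesis using True P1 by (simp add: av_mult av_inverse)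
  next
    case False
    define b0 where "b0 = rep t"
    have b0: "b0 \<in> Rs" "av (t - b0) < 1" using rep[OF t] rep_in_Rs[OF t] b0_def by auto
    have "b0 \<noteq> a" using b0 False by auto
    then have "av (\<Prod>b\<in>Rs-{a}. (t - b)) \<le> av (t - b0)"
      using b0 finite_Rs t Rs_O O_diff by (intro prod_small_O) auto
    then have "av (\<Prod>b\<in>Rs-{a}. (t - b)) < 1" using b0 by simp
    then show ?thesis using False pl P1 by (simp add: av_mult av_inverse)
  qed
qed

lemma lag_O: "a \<in> Rs \<Longrightarrow> t \<in> Ov \<Longrightarrow> poly (lag a) t \<in> Ov"
  by (simp add: lag_expand O_sum O_mult O_power lag_coeff_O)

end


lemma dig_zero: "(q::nat) \<ge> 1 \<Longrightarrow> i < q ^ j \<Longrightarrow> i div q ^ j mod q = 0"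
  by simp

lemma de_prod:
  assumes q: "(q::nat) \<ge> 2" and i: "i < q ^ n"
  shows "digit_ext q e i x = (\<Prod>j<n. e j x ^ (i div q ^ j mod q))"
proof -
  have big: "i < q ^ j" if "j \<ge> i \<or> j \<ge> n" for j
  proof (cases "j \<ge> n")
    case True
    then have "q ^ n \<le> q ^ j" using q by (simp add: power_increasing)
    then show ?thesis using i by simp
  next
    case False
    then have "j \<ge> i" using that by simp
    have "i < 2 ^ i" by (rule less_exp)
    also have "\<dots> \<le> 2 ^ j" using \<open>j \<ge> i\<close> by (simp add: power_increasing)
    also have "\<dots> \<le> q ^ j" using q by (simp add: power_mono)
    finally show ?thesis .
  qed
  have "digit_ext q e i x = (\<Prod>j<max i n. e j x ^ (i div q ^ j mod q))"
    unfolding digit_ext_def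
  proof (rule prod.mono_neutral_left)
    show "\<forall>j\<in>{..<max i n} - {..<i}. e j x ^ (i div q ^ j mod q) = 1"
    proof
      fix j assume "j \<in> {..<max i n} - {..<i}"
      then have "i < q ^ j" using big by simp
      then show "e j x ^ (i div q ^ j mod q) = 1" by simp
    qed
  qed auto
  also have "\<dots> = (\<Prod>j<n. e j x ^ (i div q ^ j mod q))"
  proof (rule prod.mono_neutral_right)
    show "\<forall>j\<in>{..<max i n} - {..<n}. e j x ^ (i div q ^ j mod q) = 1"
    proof
      fix j assume "j \<in> {..<max i n} - {..<n}"
      then have "i < q ^ j" using big by simp
      then show "e j x ^ (i div q ^ j mod q) = 1" by simp
    qed
  qed auto
  finally show ?thesis .
qed

lemma dig_low:
  assumes q: "(q::nat) \<ge> 1" and i: "i < q ^ n" and j: "j < n"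
  shows "(i + m * q ^ n) div q ^ j mod q = i div q ^ j mod q"
proof -
  obtain d where n: "n = Suc j + d" using less_imp_Suc_add[OF j] by auto
  have eq: "i + m * q ^ n = i + (m * q ^ d * q) * q ^ j" unfolding n by (simp add: power_add ac_simps)
  have "q ^ j \<noteq> 0" using q by simp
  then have "(i + (m * q ^ d * q) * q ^ j) div q ^ j = m * q ^ d * q + i div q ^ j" by (rule div_mult_self1)
  then have "(i + m * q ^ n) div q ^ j = i div q ^ j + (m * q ^ d) * q" unfolding eq by simp
  then show ?thesis by simp
qed

lemma dig_top:
  assumes q: "(q::nat) \<ge> 1" and i: "i < q ^ n" and m: "m < q"
  shows "(i + m * q ^ n) div q ^ n mod q = m"
  using assms by simp

lemma sum_group:
  fixes g :: "nat \<Rightarrow> 'b::comm_monoid_add"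
  shows "(\<Sum>i'<K * b. g i') = (\<Sum>m<b. \<Sum>i<K. g (i + m * K))"
proof -
  have "(\<Sum>i'<b * K. g i') = (\<Sum>m<b. sum g {m * K..<m * K + K})" by (rule sum.nat_group[symmetric])
  also have "\<dots> = (\<Sum>m<b. \<Sum>i<K. g (i + m * K))"
  proof (rule sum.cong[OF refl])
    fix m
    have "sum g {0 + m * K..<K + m * K} = (\<Sum>i=0..<K. g (i + m * K))" by (rule sum.shift_bounds_nat_ivl)
    then show "sum g {m * K..<m * K + K} = (\<Sum>i<K. g (i + m * K))" by (simp add: add.commute atLeast0LessThan)
  qed
  finally show ?thesis by (simp add: mult.commute)
qed

lemma expand:
  fixes C :: "nat \<Rightarrow> nat \<Rightarrow> 'b::comm_semiring_1" and E :: "nat \<Rightarrow> 'b"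
  assumes q: "(q::nat) \<ge> 1"
  shows "(\<Prod>j<n. \<Sum>k<q. C j k * E j ^ k) =
         (\<Sum>i<q^n. (\<Prod>j<n. C j (i div q^j mod q)) * (\<Prod>j<n. E j ^ (i div q^j mod q)))"
proof (induction n)
  case 0 then show ?case by simp
next
  case (Suc n)
  let ?A = "\<lambda>i. \<Prod>j<n. C j (i div q^j mod q)"
  let ?B = "\<lambda>i. \<Prod>j<n. E j ^ (i div q^j mod q)"
  have "(\<Prod>j<Suc n. \<Sum>k<q. C j k * E j ^ k) = (\<Sum>i<q^n. ?A i * ?B i) * (\<Sum>k<q. C n k * E n ^ k)"
    using Suc by simp
  also have "\<dots> = (\<Sum>k<q. \<Sum>i<q^n. (?A i * ?B i) * (C n k * E n ^ k))"
    by (simp add: sum_product sum.swap[of _ "{..<q}"])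
  also have "\<dots> = (\<Sum>k<q. \<Sum>i<q^n. (\<Prod>j<Suc n. C j ((i + k * q^n) div q^j mod q)) *
                              (\<Prod>j<Suc n. E j ^ ((i + k * q^n) div q^j mod q)))"
  proof (intro sum.cong refl)
    fix k i assume k: "k \<in> {..<q}" and i: "i \<in> {..<q^n}"
    have 1: "(\<Prod>j<n. C j ((i + k * q^n) div q^j mod q)) = ?A i"
      by (rule prod.cong[OF refl]) (use dig_low[OF q] i in auto)
    have 2: "(\<Prod>j<n. E j ^ ((i + k * q^n) div q^j mod q)) = ?B i"
      by (rule prod.cong[OF refl]) (use dig_low[OF q] i in auto)
    have 3: "(i + k * q^n) div q^n mod q = k" using dig_top[OF q] i k by simp
    show "(?A i * ?B i) * (C n k * E n ^ k) = (\<Prod>j<Suc n. C j ((i + k * q^n) div q^j mod q)) *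
                              (\<Prod>j<Suc n. E j ^ ((i + k * q^n) div q^j mod q))"
      by (simp only: prod.lessThan_Suc 1 2 3) (simp add: ac_simps)
  qed
  also have "\<dots> = (\<Sum>i<q^n * q. (\<Prod>j<Suc n. C j (i div q^j mod q)) * (\<Prod>j<Suc n. E j ^ (i div q^j mod q)))"
    by (rule sum_group[symmetric])
  finally show ?case by (simp add: mult.commute)
qed



context setting
begin

definition "Er n = {(x,y). x \<in> Ov \<and> y \<in> Ov \<and> x - y \<in> H n}"
definition "crep n x = (SOME y. y \<in> Er n `` {x})"
definition "Xs n = crep n ` Ov"

lemma cosets_eq: "cosets_O av (H n) = Ov // Er n"
  unfolding cosets_O_def Er_def by simp

lemma equiv_Er: assumes n: "n \<ge> 1" shows "equiv Ov (Er n)"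
proof (rule equivI)
  show "refl_on Ov (Er n)" unfolding Er_def refl_on_def using H_0[OF n] by auto
  show "sym (Er n)" unfolding Er_def sym_def using H_uminus[OF n] by (auto, metis minus_diff_eq)
  show "trans (Er n)" unfolding Er_def trans_def using H_add[OF n]
    by auto (metis diff_add_cancel add_diff_eq diff_diff_eq2 add.commute)
  show "Er n \<subseteq> Ov \<times> Ov" unfolding Er_def by auto
qed

lemma crep: assumes n: "n \<ge> 1" and x: "x \<in> Ov" shows "crep n x \<in> Ov" "x - crep n x \<in> H n"
proof -
  have "x \<in> Er n `` {x}" using x H_0[OF n] unfolding Er_def by auto
  then have "crep n x \<in> Er n `` {x}" unfolding crep_def by (rule someI)
  then show "crep n x \<in> Ov" "x - crep n x \<in> H n" unfolding Er_def by auto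
qed

lemma crep_eq: assumes n: "n \<ge> 1" and xy: "x \<in> Ov" "y \<in> Ov" "x - y \<in> H n"
  shows "crep n x = crep n y"
proof -
  have "Er n `` {x} = Er n `` {y}" using equiv_Er[OF n] xy
    by (intro equiv_class_eq) (auto simp: Er_def)
  then show ?thesis unfolding crep_def by simp
qed

lemma Xs_O: "n \<ge> 1 \<Longrightarrow> y \<in> Xs n \<Longrightarrow> y \<in> Ov" unfolding Xs_def using crep by auto

lemma crep_in_Xs: "x \<in> Ov \<Longrightarrow> crep n x \<in> Xs n" unfolding Xs_def by simp

lemma crep_X: assumes n: "n \<ge> 1" and y: "y \<in> Xs n" shows "crep n y = y"
proof -
  obtain x where x: "x \<in> Ov" "y = crep n x" using y unfolding Xs_def by blast
  have "y - x \<in> H n" using crep[OF n x(1)] H_uminus[OF n] x(2) by (metis minus_diff_eq)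
  then have "crep n y = crep n x" using crep_eq[OF n] crep[OF n x(1)] x by blast
  then show ?thesis using x by simp
qed

lemma card_Xs: assumes n: "n \<ge> 1" shows "card (Xs n) = q ^ n" "finite (Xs n)"
proof -
  have bij: "bij_betw (induced_map av e n) (Ov // Er n) (PiE {..<n} (\<lambda>_. resfield av))"
    using e_bij n cosets_eq by simp
  have cardC: "card (Ov // Er n) = q ^ n"
    using bij_betw_same_card[OF bij] by (simp add: card_PiE)
  have finC: "finite (Ov // Er n)"
    using bij_betw_finite[OF bij] by (simp add: finite_PiE finite_resfield)
  define g where "g C = (SOME y. y \<in> C)" for C :: "'a set"
  have inj: "inj_on g (Ov // Er n)" unfolding g_def
  proof (rule inj_some_disjoint)
    fix C assume "C \<in> Ov // Er n" then show "C \<noteq> {}"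
      using in_quotient_imp_non_empty[OF equiv_Er[OF n]] by blast
  next
    fix C D assume "C \<in> Ov // Er n" "D \<in> Ov // Er n" "C \<inter> D \<noteq> {}"
    then show "C = D" using quotient_disj[OF equiv_Er[OF n]] by blast
  qed
  have q1: "Ov // Er n = (\<lambda>x. Er n `` {x}) ` Ov" unfolding quotient_def by auto
  have "Xs n = (\<lambda>x. g (Er n `` {x})) ` Ov" unfolding Xs_def crep_def g_def by (rule refl)
  also have "\<dots> = g ` (Ov // Er n)" unfolding q1 by (simp only: image_image)
  finally have "Xs n = g ` (Ov // Er n)" .
  then show "card (Xs n) = q ^ n" "finite (Xs n)" using inj cardC finC by (simp_all add: card_image)
qed

lemma induced_at: assumes n: "n \<ge> 1" and x: "x \<in> Ov"
  shows "induced_map av e n (Er n `` {x}) = (\<lambda>j\<in>{..<n}. red av (e j x))"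
proof -
  have "(SOME z. z \<in> Er n `` {x}) = crep n x" unfolding crep_def by simp
  moreover have "red av (e j (crep n x)) = red av (e j x)" if "j < n" for j
    using e_H n that x crep[OF n x] by metis
  ultimately show ?thesis unfolding induced_map_def by (auto intro!: restrict_ext)
qed

lemma sep: assumes n: "n \<ge> 1" and xy: "x \<in> Ov" "y \<in> Ov" and c: "\<forall>j<n. av (e j x - e j y) < 1"
  shows "x - y \<in> H n"
proof -
  have "red av (e j x) = red av (e j y)" if "j < n" for j
    using red_eq e_O xy c that by blast
  then have "induced_map av e n (Er n `` {x}) = induced_map av e n (Er n `` {y})"
    using induced_at[OF n xy(1)] induced_at[OF n xy(2)] by (auto intro!: restrict_ext)
  moreover have "inj_on (induced_map av e n) (Ov // Er n)"
    using e_bij n cosets_eq bij_betw_imp_inj_on by metis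
  ultimately have "Er n `` {x} = Er n `` {y}" using xy by (auto intro: quotientI dest: inj_onD)
  then have "(x, y) \<in> Er n" using eq_equiv_class_iff[OF equiv_Er[OF n] xy] by simp
  then show ?thesis unfolding Er_def by simp
qed

abbreviation "f i x \<equiv> digit_ext q e i x"

lemma f_O: "x \<in> Ov \<Longrightarrow> f i x \<in> Ov"
  unfolding digit_ext_def using e_O by (auto intro!: O_prod O_power)

lemma f_cont: "cont_O av (digit_ext q e i)"
proof -
  have "cont_O av (\<lambda>x. \<Prod>j<i. e j x ^ (i div q ^ j mod q))"
    using e_cont e_O by (intro cont_prod_O cont_power_O) (auto intro: O_power)
  then show ?thesis unfolding digit_ext_def by simp
qed

lemma sum_cong_O:
  assumes "\<And>i. i \<in> A \<Longrightarrow> av (u i - v i) < 1 \<and> w i \<in> Ov"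
  shows "av ((\<Sum>i\<in>A. u i * w i) - (\<Sum>i\<in>A. v i * w i)) < 1"
proof -
  have "(\<Sum>i\<in>A. u i * w i) - (\<Sum>i\<in>A. v i * w i) = (\<Sum>i\<in>A. w i * (u i - v i))"
    by (simp add: sum_subtractf[symmetric] algebra_simps)
  also have "av \<dots> < 1" using assms inO by (intro av_sum_less) (auto intro: av_mult_less1)
  finally show ?thesis .
qed

end


context setting
begin

lemma span:
  assumes n: "n \<ge> 1" and phO: "\<forall>x\<in>Ov. \<phi> x \<in> Ov"
    and phH: "\<forall>x\<in>Ov. \<forall>y\<in>Ov. x - y \<in> H n \<longrightarrow> av (\<phi> x - \<phi> y) < 1"
  shows "\<exists>a. (\<forall>i. a i \<in> Ov) \<and> (\<forall>x\<in>Ov. av (\<phi> x - (\<Sum>i<q^n. a i * f i x)) < 1)"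
proof -
  define Lg where "Lg y j = lag (rep (e j y))" for y j
  define D where "D y i = (\<Prod>j<n. coeff (Lg y j) (i div q^j mod q))" for y i
  define a where "a i = (\<Sum>y\<in>Xs n. \<phi> y * D y i)" for i
  define \<delta> where "\<delta> y x = (\<Prod>j<n. poly (Lg y j) (e j x))" for y x
  have repR: "rep (e j y) \<in> Rs" if "y \<in> Xs n" for j y
    using rep_in_Rs e_O Xs_O[OF n that] by blast
  have DO: "D y i \<in> Ov" if "y \<in> Xs n" for y i
    unfolding D_def Lg_def using repR[OF that] by (auto intro!: O_prod lag_coeff_O)
  have aO: "a i \<in> Ov" for i
    unfolding a_def using DO phO Xs_O[OF n] by (auto intro!: O_sum O_mult)
  have q1: "q \<ge> 1" using q_ge2 by simp
  have c1: "\<delta> y x = (\<Sum>i<q^n. D y i * f i x)" if y: "y \<in> Xs n" and x: "x \<in> Ov" for x y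
  proof -
    have "\<delta> y x = (\<Prod>j<n. \<Sum>k<q. coeff (Lg y j) k * e j x ^ k)"
      unfolding \<delta>_def Lg_def using lag_expand[OF repR[OF y]] by simp
    also have "\<dots> = (\<Sum>i<q^n. (\<Prod>j<n. coeff (Lg y j) (i div q^j mod q)) * (\<Prod>j<n. e j x ^ (i div q^j mod q)))"
      by (rule expand[OF q1])
    also have "\<dots> = (\<Sum>i<q^n. D y i * f i x)"
    proof (intro sum.cong refl)
      fix i assume "i \<in> {..<q^n}"
      then have "f i x = (\<Prod>j<n. e j x ^ (i div q^j mod q))" using de_prod[OF q_ge2, of i n e x] by simp
      then show "(\<Prod>j<n. coeff (Lg y j) (i div q^j mod q)) * (\<Prod>j<n. e j x ^ (i div q^j mod q)) = D y i * f i x"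
        unfolding D_def by simp
    qed
    finally show ?thesis .
  qed
  have c2: "(\<Sum>i<q^n. a i * f i x) = (\<Sum>y\<in>Xs n. \<phi> y * \<delta> y x)" if x: "x \<in> Ov" for x
  proof -
    have "(\<Sum>i<q^n. a i * f i x) = (\<Sum>i<q^n. \<Sum>y\<in>Xs n. \<phi> y * (D y i * f i x))"
      unfolding a_def by (simp add: sum_distrib_right mult.assoc)
    also have "\<dots> = (\<Sum>y\<in>Xs n. \<Sum>i<q^n. \<phi> y * (D y i * f i x))" by (rule sum.swap)
    also have "\<dots> = (\<Sum>y\<in>Xs n. \<phi> y * \<delta> y x)"
      using c1 x by (simp add: sum_distrib_left)
    finally show ?thesis .
  qed
  have polyO: "poly (Lg y j) (e j x) \<in> Ov" if "y \<in> Xs n" "x \<in> Ov" for y j x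
    unfolding Lg_def using lag_O repR e_O that by blast
  have c3: "av (\<delta> y x - (if y = crep n x then 1 else 0)) < 1" if y: "y \<in> Xs n" and x: "x \<in> Ov" for x y
  proof (cases "y = crep n x")
    case True
    then have xy: "x - y \<in> H n" using crep[OF n x] by simp
    have "av (\<delta> y x - (\<Prod>j<n. 1)) < 1" unfolding \<delta>_def
    proof (rule prod_cong_O)
      fix j assume j: "j \<in> {..<n}"
      have "red av (e j x) = red av (e j y)" using e_H n j x Xs_O[OF n y] xy by blast
      then have "av (e j x - e j y) < 1" using red_eq e_O x Xs_O[OF n y] by blast
      moreover have "av (e j y - rep (e j y)) < 1" using rep e_O Xs_O[OF n y] by blast
      ultimately have "av (e j x - rep (e j y)) < 1" using av_tri[of "e j x" "rep (e j y)" "e j y"] by simp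
      then have "av (poly (Lg y j) (e j x) - 1) < 1" unfolding Lg_def using lag_eval[OF repR[OF y, of j], of "e j x"] e_O x by simp
      then show "poly (Lg y j) (e j x) \<in> Ov \<and> 1 \<in> Ov \<and> av (poly (Lg y j) (e j x) - 1) < 1"
        using polyO y x by simp
    qed
    then show ?thesis using True by simp
  next
    case False
    have "\<exists>j<n. \<not> av (e j x - e j y) < 1"
    proof (rule ccontr)
      assume "\<not> ?thesis"
      then have "x - y \<in> H n" using sep[OF n x Xs_O[OF n y]] by blast
      then have "crep n x = crep n y" using crep_eq[OF n x Xs_O[OF n y]] by blast
      then show False using False crep_X[OF n y] by simp
    qed
    then obtain j where j: "j < n" "\<not> av (e j x - e j y) < 1" by blast
    have "av (e j y - rep (e j y)) < 1" using rep e_O Xs_O[OF n y] by blast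
    then have "\<not> av (e j x - rep (e j y)) < 1"
      using j av_tri[of "e j x" "e j y" "rep (e j y)"] av_commute by (metis av_diff_less diff_diff_eq2 diff_add_cancel le_less_trans max_less_iff_conj)
    then have "av (poly (Lg y j) (e j x)) < 1" unfolding Lg_def using lag_eval[OF repR[OF y, of j], of "e j x"] e_O x by simp
    moreover have "av (\<delta> y x) \<le> av (poly (Lg y j) (e j x))" unfolding \<delta>_def
      using j polyO[OF y x] by (intro prod_small_O) auto
    ultimately show ?thesis using False by simp
  qed
  show ?thesis
  proof (intro exI conjI allI ballI)
    show "a i \<in> Ov" for i by (rule aO)
    fix x assume x: "x \<in> Ov"
    define y0 where "y0 = crep n x"
    have y0: "y0 \<in> Xs n" "x - y0 \<in> H n" "y0 \<in> Ov" using crep_in_Xs[OF x, of n] crep[OF n x] y0_def by auto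
    have fin: "finite (Xs n)" using card_Xs[OF n] by simp
    have "(\<Sum>y\<in>Xs n. \<phi> y * \<delta> y x) = \<phi> y0 * \<delta> y0 x + (\<Sum>y\<in>Xs n - {y0}. \<phi> y * \<delta> y x)"
      using fin y0(1) by (simp add: sum.remove)
    then have eq: "\<phi> x - (\<Sum>i<q^n. a i * f i x) = ((\<phi> x - \<phi> y0) + \<phi> y0 * (1 - \<delta> y0 x)) - (\<Sum>y\<in>Xs n - {y0}. \<phi> y * \<delta> y x)"
      using c2[OF x] by (simp add: algebra_simps)
    have t1: "av (\<phi> x - \<phi> y0) < 1" using phH x y0 by blast
    have "av (\<delta> y0 x - 1) < 1" using c3[OF y0(1) x] y0_def by simp
    then have t2: "av (\<phi> y0 * (1 - \<delta> y0 x)) < 1" using phO y0(3) inO av_commute[of "\<delta> y0 x" 1]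
      by (intro av_mult_less1) auto
    have t3: "av (\<Sum>y\<in>Xs n - {y0}. \<phi> y * \<delta> y x) < 1"
    proof (rule av_sum_less)
      fix y assume y: "y \<in> Xs n - {y0}"
      then have "av (\<delta> y x) < 1" using c3[of y x] x y0_def by auto
      then show "av (\<phi> y * \<delta> y x) < 1" using phO Xs_O[OF n] y inO by (intro av_mult_less1) auto
    qed simp
    show "av (\<phi> x - (\<Sum>i<q^n. a i * f i x)) < 1" unfolding eq
      using av_diff_less[OF av_add_less[OF t1 t2] t3] .
  qed
qed

end


context setting
begin

lemma indep:
  assumes n: "n \<ge> 1" and aO: "\<forall>i<q^n. a i \<in> Ov"
    and small: "\<forall>x\<in>Ov. av (\<Sum>i<q^n. a i * f i x) < 1"
  shows "\<forall>i<q^n. av (a i) < 1"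
proof -
  define Q where "Q = q ^ n"
  define \<Psi> where "\<Psi> b = restrict (\<lambda>x. rep (\<Sum>i<Q. b i * f i x)) (Xs n)" for b
  define Dm where "Dm = PiE {..<Q} (\<lambda>_. Rs)"
  define Cd where "Cd = PiE (Xs n) (\<lambda>_. Rs)"
  have finX: "finite (Xs n)" and cX: "card (Xs n) = Q" using card_Xs[OF n] Q_def by auto
  have finD: "finite Dm" unfolding Dm_def by (simp add: finite_PiE finite_Rs)
  have cD: "card Dm = q ^ Q" unfolding Dm_def by (simp add: card_PiE card_Rs)
  have cC: "card Cd = q ^ Q" unfolding Cd_def using finX cX by (simp add: card_PiE card_Rs)
  have sumO: "(\<Sum>i<Q. b i * f i x) \<in> Ov" if "b \<in> Dm" "x \<in> Ov" for b x
    using that Rs_O f_O unfolding Dm_def by (auto intro!: O_sum O_mult)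
  have img: "\<Psi> ` Dm = Cd"
  proof
    show "\<Psi> ` Dm \<subseteq> Cd"
    proof
      fix g assume "g \<in> \<Psi> ` Dm"
      then obtain b where b: "b \<in> Dm" "g = \<Psi> b" by blast
      show "g \<in> Cd" unfolding b Cd_def \<Psi>_def
        using sumO[OF b(1)] Xs_O[OF n] rep_in_Rs by auto
    qed
    show "Cd \<subseteq> \<Psi> ` Dm"
    proof
      fix g assume g: "g \<in> Cd"
      define \<phi> where "\<phi> x = g (crep n x)" for x
      have gR: "g y \<in> Rs" if "y \<in> Xs n" for y using g that unfolding Cd_def by auto
      have phO: "\<forall>x\<in>Ov. \<phi> x \<in> Ov"
      proof
        fix x assume "x \<in> Ov"
        then have "crep n x \<in> Xs n" by (rule crep_in_Xs)
        then show "\<phi> x \<in> Ov" unfolding \<phi>_def using gR Rs_O by blast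
      qed
      have phH: "\<forall>x\<in>Ov. \<forall>y\<in>Ov. x - y \<in> H n \<longrightarrow> av (\<phi> x - \<phi> y) < 1"
      proof (intro ballI impI)
        fix x y assume "x \<in> Ov" "y \<in> Ov" "x - y \<in> H n"
        then have "crep n x = crep n y" by (rule crep_eq[OF n])
        then show "av (\<phi> x - \<phi> y) < 1" unfolding \<phi>_def by simp
      qed
      obtain a' where a': "\<forall>i. a' i \<in> Ov" "\<forall>x\<in>Ov. av (\<phi> x - (\<Sum>i<Q. a' i * f i x)) < 1"
        using span[OF n phO phH, folded Q_def] by (elim exE conjE)
      define b where "b = restrict (\<lambda>i. rep (a' i)) {..<Q}"
      have bD: "b \<in> Dm" unfolding b_def Dm_def using a'(1) rep_in_Rs by auto
      have "\<Psi> b = g"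
      proof (rule ext)
        fix x show "\<Psi> b x = g x"
        proof (cases "x \<in> Xs n")
          case False
          have "g x = undefined" using g False unfolding Cd_def by (rule PiE_arb)
          moreover have "\<Psi> b x = undefined" unfolding \<Psi>_def using False by (simp only: restrict_def if_False)
          ultimately show ?thesis by simp
        next
          case True
          have xO: "x \<in> Ov" using Xs_O[OF n True] .
          have s1: "(\<Sum>i<Q. b i * f i x) = (\<Sum>i<Q. rep (a' i) * f i x)" unfolding b_def by simp
          have "av ((\<Sum>i<Q. rep (a' i) * f i x) - (\<Sum>i<Q. a' i * f i x)) < 1"
          proof (rule sum_cong_O)
            fix i show "av (rep (a' i) - a' i) < 1 \<and> f i x \<in> Ov"
              using rep[of "a' i"] a'(1) f_O[OF xO] av_commute by metis
          qed
          moreover have "av ((\<Sum>i<Q. a' i * f i x) - \<phi> x) < 1" using a'(2) xO av_commute by metis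
          ultimately have "av ((\<Sum>i<Q. b i * f i x) - \<phi> x) < 1"
            unfolding s1 using av_tri[of "\<Sum>i<Q. rep (a' i) * f i x" "\<phi> x" "\<Sum>i<Q. a' i * f i x"] by simp
          then have "rep (\<Sum>i<Q. b i * f i x) = rep (\<phi> x)"
            using rep_cong sumO[OF bD xO] phO xO by blast
          moreover have "\<phi> x = g x" unfolding \<phi>_def using crep_X[OF n True] by simp
          moreover have "rep (g x) = g x" using rep_Rs gR True by blast
          ultimately show ?thesis unfolding \<Psi>_def using True by simp
        qed
      qed
      then show "g \<in> \<Psi> ` Dm" using bD by blast
    qed
  qed
  have inj: "inj_on \<Psi> Dm" using finD img cD cC by (intro eq_card_imp_inj_on) auto
  define b1 where "b1 = restrict (\<lambda>i. rep (a i)) {..<Q}"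
  define b0 where "b0 = restrict (\<lambda>i. rep 0) {..<Q}"
  have b1D: "b1 \<in> Dm" unfolding b1_def Dm_def using aO rep_in_Rs Q_def by auto
  have b0D: "b0 \<in> Dm" unfolding b0_def Dm_def using rep_in_Rs by auto
  have r0: "av (rep 0) < 1" using rep[of 0] by simp
  have "\<Psi> b1 = \<Psi> b0"
  proof -
    have "rep (\<Sum>i<Q. b1 i * f i x) = rep (\<Sum>i<Q. b0 i * f i x)" if x: "x \<in> Ov" for x
    proof -
      have "av ((\<Sum>i<Q. rep (a i) * f i x) - (\<Sum>i<Q. a i * f i x)) < 1"
      proof (rule sum_cong_O)
        fix i assume "i \<in> {..<Q}"
        then show "av (rep (a i) - a i) < 1 \<and> f i x \<in> Ov"
          using rep[of "a i"] aO Q_def f_O[OF x] av_commute by (metis lessThan_iff)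
      qed
      moreover have "av (\<Sum>i<Q. a i * f i x) < 1" using small x Q_def by simp
      ultimately have 1: "av (\<Sum>i<Q. b1 i * f i x) < 1" unfolding b1_def
        using av_add_less[of "(\<Sum>i<Q. rep (a i) * f i x) - (\<Sum>i<Q. a i * f i x)" 1 "\<Sum>i<Q. a i * f i x"] by simp
      have 2: "av (\<Sum>i<Q. b0 i * f i x) < 1" unfolding b0_def
        using r0 f_O[OF x] inO by (auto intro!: av_sum_less) (metis av_mult_less1 mult.commute)
      have "av ((\<Sum>i<Q. b1 i * f i x) - (\<Sum>i<Q. b0 i * f i x)) < 1" using 1 2 by (rule av_diff_less)
      then show ?thesis using rep_cong sumO b1D b0D x by blast
    qed
    then show ?thesis unfolding \<Psi>_def using Xs_O[OF n] by (auto intro!: restrict_ext)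
  qed
  then have "b1 = b0" using inj b1D b0D by (auto dest: inj_onD)
  show ?thesis
  proof (intro allI impI)
    fix i assume i: "i < q ^ n"
    have "b1 i = b0 i" using \<open>b1 = b0\<close> by simp
    moreover have "b1 i = rep (a i)" "b0 i = rep 0" unfolding b1_def b0_def Q_def using i by simp_all
    ultimately have "rep (a i) = rep 0" by simp
    then show "av (a i) < 1" using rep_eq_iff[of "a i" 0] aO i by simp
  qed
qed

end


lemma sum_if_less:
  assumes "N \<le> (M::nat)" shows "(\<Sum>k<M. if k < N then u k else 0) = (\<Sum>k<N. u k)"
proof -
  have "(\<Sum>k<M. if k < N then u k else 0) = sum u {k \<in> {..<M}. k < N}"
    by (rule sum.inter_filter[symmetric]) simp
  also have "{k \<in> {..<M}. k < N} = {..<N}" using assms by auto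
  finally show ?thesis .
qed

lemma le_eps:
  fixes x y :: real
  assumes "\<forall>\<epsilon>>0. x \<le> max \<epsilon> y" "0 \<le> y" shows "x \<le> y"
proof (rule ccontr)
  assume "\<not> x \<le> y"
  then have "(x + y) / 2 > 0" "x > (x + y) / 2" "y < (x + y) / 2" using assms(2) by auto
  moreover have "x \<le> max ((x + y) / 2) y" using assms(1) \<open>(x + y) / 2 > 0\<close> by blast
  ultimately show False by (simp add: max_def split: if_splits)
qed

context setting
begin

lemma coef_bound:
  assumes B: "\<forall>x\<in>Ov. av (\<Sum>k<N. b k * f k x) \<le> B" and i: "i < N"
  shows "av (b i) \<le> B"
proof (rule ccontr)
  assume contra: "\<not> av (b i) \<le> B"
  have B0: "0 \<le> B" using B[rule_format, OF O_0] av_nonneg order.trans by blast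
  define M where "M = Max ((\<lambda>k. av (b k)) ` {..<N})"
  have "M \<in> (\<lambda>k. av (b k)) ` {..<N}" unfolding M_def using i by (intro Max_in) auto
  then obtain i1 where i1: "i1 < N" "av (b i1) = M" by auto
  have Mge: "av (b k) \<le> M" if "k < N" for k unfolding M_def using that by (intro Max_ge) auto
  have MB: "M > B" using Mge[OF i] contra by simp
  then have bne: "b i1 \<noteq> 0" using B0 i1 by auto
  define n where "n = Suc N"
  have n1: "n \<ge> 1" unfolding n_def by simp
  have Nq: "N \<le> q ^ n"
  proof -
    have "N < 2 ^ N" by (rule less_exp)
    also have "\<dots> \<le> q ^ N" using q_ge2 by (simp add: power_mono)
    also have "\<dots> \<le> q ^ n" unfolding n_def using q_ge2 by (simp add: power_increasing)
    finally show ?thesis by simp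
  qed
  define a where "a k = (if k < N then b k / b i1 else 0)" for k
  have aO: "\<forall>k<q^n. a k \<in> Ov"
  proof (intro allI impI)
    fix k show "a k \<in> Ov"
    proof (cases "k < N")
      case True
      then have "av (b k) / av (b i1) \<le> 1" using Mge[OF True] i1 MB B0 by simp
      then show ?thesis unfolding a_def inO using True by (simp add: av_divide)
    qed (simp add: a_def)
  qed
  have "\<not> av (a i1) < 1" unfolding a_def using i1 bne by simp
  have "\<not> (\<forall>x\<in>Ov. av (\<Sum>k<q^n. a k * f k x) < 1)"
  proof
    assume "\<forall>x\<in>Ov. av (\<Sum>k<q^n. a k * f k x) < 1"
    then have "\<forall>i<q^n. av (a i) < 1" by (rule indep[OF n1 aO])
    then have "av (a i1) < 1" using i1 Nq by simp
    then show False using \<open>\<not> av (a i1) < 1\<close> by simp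
  qed
  then obtain x where x: "x \<in> Ov" "\<not> av (\<Sum>k<q^n. a k * f k x) < 1" by blast
  have "(\<Sum>k<q^n. a k * f k x) = (\<Sum>k<q^n. if k < N then b k / b i1 * f k x else 0)"
    unfolding a_def by (intro sum.cong) auto
  also have "\<dots> = (\<Sum>k<N. b k / b i1 * f k x)" by (rule sum_if_less[OF Nq])
  also have "\<dots> = (\<Sum>k<N. b k * f k x) / b i1" by (simp add: sum_divide_distrib)
  finally have "1 \<le> av (\<Sum>k<N. b k * f k x) / M" using x i1 by (simp add: av_divide)
  then have "M \<le> av (\<Sum>k<N. b k * f k x)" using MB B0 by (simp add: le_divide_eq)
  then show False using B x MB by force
qed

lemma base:
  assumes g: "cont_O av g" "\<forall>x\<in>Ov. av (g x) \<le> 1"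
  shows "\<exists>N a. \<forall>x\<in>Ov. av (g x - (\<Sum>i<N. a i * f i x)) \<le> \<rho>"
proof -
  obtain n where n: "n \<ge> 1" "\<forall>x\<in>Ov. \<forall>y\<in>Ov. x - y \<in> H n \<longrightarrow> av (g x - g y) < 1"
    using cont_H[OF g(1), of 1] by auto
  have gO: "\<forall>x\<in>Ov. g x \<in> Ov" using g(2) inO by blast
  obtain a where "\<forall>x\<in>Ov. av (g x - (\<Sum>i<q^n. a i * f i x)) < 1"
    using span[OF n(1) gO n(2)] by blast
  then show ?thesis using unif(3) by blast
qed

lemma iter:
  "\<forall>g. cont_O av g \<and> (\<forall>x\<in>Ov. av (g x) \<le> 1) \<longrightarrow>
     (\<exists>N a. \<forall>x\<in>Ov. av (g x - (\<Sum>i<N. a i * f i x)) \<le> \<rho> ^ k)"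
proof (induction k)
  case 0
  show ?case
  proof (intro allI impI)
    fix g assume "cont_O av g \<and> (\<forall>x\<in>Ov. av (g x) \<le> 1)"
    then show "\<exists>N a. \<forall>x\<in>Ov. av (g x - (\<Sum>i<N. a i * f i x)) \<le> \<rho> ^ 0"
      by (intro exI[of _ 0]) simp
  qed
next
  case (Suc k)
  show ?case
  proof (intro allI impI)
    fix g assume g: "cont_O av g \<and> (\<forall>x\<in>Ov. av (g x) \<le> 1)"
    obtain N a where Na: "\<forall>x\<in>Ov. av (g x - (\<Sum>i<N. a i * f i x)) \<le> \<rho> ^ k"
      using Suc g by blast
    define c where "c = inverse (unif ^ k)"
    define h where "h x = c * (g x - (\<Sum>i<N. a i * f i x))" for x
    have pk: "\<rho> ^ k > 0" using unif(1) by simp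
    have hc: "cont_O av h" unfolding h_def
      using g f_cont by (intro cont_cmult cont_diff cont_sum) auto
    have hb: "\<forall>x\<in>Ov. av (h x) \<le> 1"
    proof
      fix x assume "x \<in> Ov"
      then have "av (g x - (\<Sum>i<N. a i * f i x)) \<le> \<rho> ^ k" using Na by blast
      moreover have "av (h x) = av (g x - (\<Sum>i<N. a i * f i x)) / \<rho> ^ k"
        unfolding h_def c_def by (simp add: av_mult av_inverse av_power divide_inverse mult.commute)
      ultimately show "av (h x) \<le> 1" using pk by simp
    qed
    obtain N' a' where Na': "\<forall>x\<in>Ov. av (h x - (\<Sum>i<N'. a' i * f i x)) \<le> \<rho>"
      using base[OF hc hb] by blast
    define M where "M = max N N'"
    define a'' where "a'' i = (if i < N then a i else 0) + (if i < N' then unif ^ k * a' i else 0)" for i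
    show "\<exists>N a. \<forall>x\<in>Ov. av (g x - (\<Sum>i<N. a i * f i x)) \<le> \<rho> ^ Suc k"
    proof (intro exI[of _ M] exI[of _ a''] ballI)
      fix x assume x: "x \<in> Ov"
      have "(\<Sum>i<M. a'' i * f i x) = (\<Sum>i<M. (if i < N then a i * f i x else 0)) + (\<Sum>i<M. (if i < N' then unif ^ k * (a' i * f i x) else 0))"
        unfolding a''_def sum.distrib[symmetric] by (intro sum.cong refl) (simp add: distrib_right mult.assoc)
      also have "\<dots> = (\<Sum>i<N. a i * f i x) + (\<Sum>i<N'. unif ^ k * (a' i * f i x))"
        unfolding M_def by (simp add: sum_if_less)
      finally have s: "(\<Sum>i<M. a'' i * f i x) = (\<Sum>i<N. a i * f i x) + unif ^ k * (\<Sum>i<N'. a' i * f i x)"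
        by (simp add: sum_distrib_left)
      have ne: "unif ^ k \<noteq> 0" using unif_ne0 by simp
      have "g x - (\<Sum>i<N. a i * f i x) = unif ^ k * h x" unfolding h_def c_def using ne by simp
      then have "g x - (\<Sum>i<M. a'' i * f i x) = unif ^ k * (h x - (\<Sum>i<N'. a' i * f i x))"
        unfolding s by (simp add: algebra_simps)
      then have "av (g x - (\<Sum>i<M. a'' i * f i x)) = \<rho> ^ k * av (h x - (\<Sum>i<N'. a' i * f i x))"
        by (simp add: av_mult av_power)
      also have "\<dots> \<le> \<rho> ^ k * \<rho>" using Na' x pk by (simp add: mult_left_mono)
      finally show "av (g x - (\<Sum>i<M. a'' i * f i x)) \<le> \<rho> ^ Suc k" by (simp add: mult.commute)
    qed
  qed
qed

lemma supnorm_props: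
  assumes "\<forall>x\<in>Ov. av (g x) \<le> B"
  shows "supnorm av g \<le> B" "0 \<le> supnorm av g" "\<forall>x\<in>Ov. av (g x) \<le> supnorm av g"
proof -
  have bdd: "bdd_above ((\<lambda>x. av (g x)) ` Ov)" using assms by (auto intro: bdd_aboveI2)
  show "supnorm av g \<le> B" unfolding supnorm_def
  proof (intro cSUP_least)
    show "Ov \<noteq> {}" using O_0 by blast
  qed (use assms in auto)
  show 3: "\<forall>x\<in>Ov. av (g x) \<le> supnorm av g" unfolding supnorm_def using bdd by (auto intro: cSUP_upper)
  show "0 \<le> supnorm av g" using 3 O_0 av_nonneg order.trans by blast
qed

end


context setting
begin

lemma expansion:
  assumes F: "cont_O av F"
  shows "\<exists>c::nat \<Rightarrow> 'a. (\<lambda>n. av (c n)) \<longlonglongrightarrow> 0 \<and>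
           (\<lambda>N. supnorm av (\<lambda>x. F x - (\<Sum>n<N. c n * f n x))) \<longlonglongrightarrow> 0 \<and>
           supnorm av F = (SUP n. av (c n))"
proof -
  obtain B where B: "\<forall>x\<in>Ov. av (F x) \<le> B" using cont_bounded[OF F] by blast
  define B1 where "B1 = max B 1"
  have B1: "B1 > 0" "\<forall>x\<in>Ov. av (F x) \<le> B1" using B unfolding B1_def by force+
  obtain m where m: "\<rho> ^ m < 1 / B1" using real_arch_pow_inv[of "1 / B1" \<rho>] B1 unif by auto
  have pm: "\<rho> ^ m > 0" using unif(1) by simp
  have um: "unif ^ m \<noteq> 0" using unif_ne0 by simp
  define G where "G x = unif ^ m * F x" for x
  have Gc: "cont_O av G" unfolding G_def using F by (rule cont_cmult)
  have Gb: "\<forall>x\<in>Ov. av (G x) \<le> 1"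
  proof
    fix x assume "x \<in> Ov"
    then have "av (F x) \<le> B1" using B1 by blast
    then have "\<rho> ^ m * av (F x) \<le> \<rho> ^ m * B1" using pm by (simp add: mult_left_mono)
    also have "\<dots> \<le> 1" using m B1 by (simp add: field_simps)
    finally show "av (G x) \<le> 1" unfolding G_def by (simp add: av_mult av_power)
  qed
  define E where "E k = \<rho> ^ k / \<rho> ^ m" for k
  have E0: "E k \<ge> 0" for k unfolding E_def using unif by simp
  have Emono: "E l \<le> E k" if "k \<le> l" for k l
    unfolding E_def using unif that pm by (simp add: divide_right_mono power_decreasing)
  have Esmall: "\<exists>k. E k < \<epsilon>" if "\<epsilon> > 0" for \<epsilon>
  proof -
    have "\<epsilon> * \<rho> ^ m > 0" using that pm by simp
    then obtain k where "\<rho> ^ k < \<epsilon> * \<rho> ^ m" using real_arch_pow_inv[of "\<epsilon> * \<rho> ^ m" \<rho>] unif by auto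
    then show ?thesis unfolding E_def using pm by (auto simp: divide_less_eq)
  qed
  have "\<forall>k. \<exists>N a. \<forall>x\<in>Ov. av (G x - (\<Sum>i<N. a i * f i x)) \<le> \<rho> ^ k"
    using iter Gc Gb by blast
  then obtain Nk ak where Nak: "\<forall>k. \<forall>x\<in>Ov. av (G x - (\<Sum>i<Nk k. ak k i * f i x)) \<le> \<rho> ^ k"
    by metis
  define A where "A k i = (if i < Nk k then ak k i / unif ^ m else 0)" for k i
  have PA: "av (F x - (\<Sum>i<M. A k i * f i x)) \<le> E k" if "Nk k \<le> M" "x \<in> Ov" for k M x
  proof -
    have "(\<Sum>i<M. A k i * f i x) = (\<Sum>i<M. if i < Nk k then ak k i * f i x / unif ^ m else 0)"
      unfolding A_def by (intro sum.cong refl) simp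
    also have "\<dots> = (\<Sum>i<Nk k. ak k i * f i x / unif ^ m)" by (rule sum_if_less[OF that(1)])
    also have "\<dots> = (\<Sum>i<Nk k. ak k i * f i x) / unif ^ m" by (simp add: sum_divide_distrib)
    finally have "F x - (\<Sum>i<M. A k i * f i x) = (G x - (\<Sum>i<Nk k. ak k i * f i x)) / unif ^ m"
      unfolding G_def using um by (simp add: field_simps)
    then have "av (F x - (\<Sum>i<M. A k i * f i x)) = av (G x - (\<Sum>i<Nk k. ak k i * f i x)) / \<rho> ^ m"
      by (simp add: av_divide av_power)
    also have "\<dots> \<le> E k" unfolding E_def using Nak that(2) pm by (simp add: divide_right_mono)
    finally show ?thesis .
  qed
  have Adiff: "av (A k i - A l i) \<le> max (E k) (E l)" for k l i
  proof (cases "i < max (Nk k) (Nk l)")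
    case False
    then have "A k i = 0" "A l i = 0" unfolding A_def by auto
    then show ?thesis using E0[of k] by (simp add: le_max_iff_disj)
  next
    case True
    define M where "M = max (Nk k) (Nk l)"
    have "\<forall>x\<in>Ov. av (\<Sum>j<M. (A k j - A l j) * f j x) \<le> max (E k) (E l)"
    proof
      fix x assume x: "x \<in> Ov"
      have "(\<Sum>j<M. (A k j - A l j) * f j x) = (\<Sum>j<M. A k j * f j x) - (\<Sum>j<M. A l j * f j x)"
        unfolding left_diff_distrib by (rule sum_subtractf)
      then have eq: "(\<Sum>j<M. (A k j - A l j) * f j x) = (F x - (\<Sum>j<M. A l j * f j x)) - (F x - (\<Sum>j<M. A k j * f j x))"
        by simp
      have 1: "av (F x - (\<Sum>j<M. A l j * f j x)) \<le> E l" and 2: "av (F x - (\<Sum>j<M. A k j * f j x)) \<le> E k"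
        using PA x M_def by auto
      have "av ((F x - (\<Sum>j<M. A l j * f j x)) - (F x - (\<Sum>j<M. A k j * f j x))) \<le>
            max (av (F x - (\<Sum>j<M. A l j * f j x))) (av (F x - (\<Sum>j<M. A k j * f j x)))" by (rule av_diff)
      then show "av (\<Sum>j<M. (A k j - A l j) * f j x) \<le> max (E k) (E l)"
        unfolding eq using 1 2 by (simp add: max_def split: if_splits)
    qed
    from coef_bound[where b="\<lambda>j. A k j - A l j", OF this] show ?thesis using True M_def by simp
  qed
  have cau: "\<exists>L. \<forall>\<epsilon>>0. \<exists>N. \<forall>n\<ge>N. av (A n i - L) < \<epsilon>" for i
  proof (rule complete, intro allI impI)
    fix \<epsilon> :: real assume "\<epsilon> > 0"
    then obtain K where K: "E K < \<epsilon>" using Esmall by blast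
    show "\<exists>N. \<forall>k\<ge>N. \<forall>l\<ge>N. av (A k i - A l i) < \<epsilon>"
    proof (intro exI allI impI)
      fix k l assume "K \<le> k" "K \<le> l"
      then have "max (E k) (E l) \<le> E K" using Emono by simp
      then show "av (A k i - A l i) < \<epsilon>" using Adiff[of k i l] K by linarith
    qed
  qed
  define c where "c i = (SOME L. \<forall>\<epsilon>>0. \<exists>N. \<forall>n\<ge>N. av (A n i - L) < \<epsilon>)" for i
  have climit: "\<forall>\<epsilon>>0. \<exists>N. \<forall>n\<ge>N. av (A n i - c i) < \<epsilon>" for i
    unfolding c_def using someI_ex[OF cau[of i]] .
  have cA: "av (c i - A k i) \<le> E k" for i k
  proof (rule le_eps[OF _ E0], intro allI impI)
    fix \<epsilon> :: real assume "\<epsilon> > 0"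
    then obtain N where N: "\<forall>n\<ge>N. av (A n i - c i) < \<epsilon>" using climit by blast
    define l where "l = max N k"
    have 1: "av (c i - A l i) < \<epsilon>" using N l_def av_commute by (metis max.cobounded1)
    have 2: "av (A l i - A k i) \<le> E k" using Adiff[of l i k] Emono[of k l] l_def by simp
    have "av (c i - A k i) \<le> max (av (c i - A l i)) (av (A l i - A k i))" by (rule av_tri)
    then show "av (c i - A k i) \<le> max \<epsilon> (E k)" using 1 2 by (simp add: le_max_iff_disj) linarith
  qed
  have ctend: "(\<lambda>n. av (c n)) \<longlonglongrightarrow> 0"
  proof (rule LIMSEQ_I)
    fix r :: real assume "r > 0"
    then obtain K where K: "E K < r" using Esmall by blast
    show "\<exists>no. \<forall>n\<ge>no. norm (av (c n) - 0) < r"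
    proof (intro exI allI impI)
      fix n assume "Nk K \<le> n"
      then have "A K n = 0" unfolding A_def by simp
      then show "norm (av (c n) - 0) < r" using cA[of n K] K by simp
    qed
  qed
  have psum: "av (F x - (\<Sum>i<M. c i * f i x)) \<le> E k" if "Nk k \<le> M" "x \<in> Ov" for k M x
  proof -
    have "(\<Sum>i<M. f i x * (A k i - c i)) = (\<Sum>i<M. A k i * f i x) - (\<Sum>i<M. c i * f i x)"
      unfolding right_diff_distrib sum_subtractf by (simp add: mult.commute)
    then have "F x - (\<Sum>i<M. c i * f i x) = (F x - (\<Sum>i<M. A k i * f i x)) + (\<Sum>i<M. f i x * (A k i - c i))"
      by simp
    moreover have "av (\<Sum>i<M. f i x * (A k i - c i)) \<le> E k"
    proof (rule av_sum_le[OF E0])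
      fix i
      have "av (A k i - c i) \<le> E k" using cA[of i k] av_commute by simp
      then show "av (f i x * (A k i - c i)) \<le> E k" using f_O[OF that(2)] inO by (intro av_mult_le1) auto
    qed
    ultimately show ?thesis using PA[OF that] av_add_le[of "F x - (\<Sum>i<M. A k i * f i x)" "E k" "\<Sum>i<M. f i x * (A k i - c i)"]
      by (simp only:)
  qed
  have stend: "(\<lambda>N. supnorm av (\<lambda>x. F x - (\<Sum>n<N. c n * f n x))) \<longlonglongrightarrow> 0"
  proof (rule LIMSEQ_I)
    fix r :: real assume "r > 0"
    then obtain K where K: "E K < r" using Esmall by blast
    show "\<exists>no. \<forall>n\<ge>no. norm (supnorm av (\<lambda>x. F x - (\<Sum>n<n. c n * f n x)) - 0) < r"
    proof (intro exI allI impI)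
      fix M assume M: "Nk K \<le> M"
      have "\<forall>x\<in>Ov. av (F x - (\<Sum>n<M. c n * f n x)) \<le> E K" using psum M by blast
      from supnorm_props[OF this]
      show "norm (supnorm av (\<lambda>x. F x - (\<Sum>n<M. c n * f n x)) - 0) < r" using K by simp
    qed
  qed
  define SF where "SF = supnorm av F"
  have SF: "0 \<le> SF" "\<forall>x\<in>Ov. av (F x) \<le> SF" using supnorm_props[OF B] SF_def by auto
  have cle: "av (c i) \<le> SF" for i
  proof (rule le_eps[OF _ SF(1)], intro allI impI)
    fix \<epsilon> :: real assume "\<epsilon> > 0"
    then obtain k where k: "E k < \<epsilon>" using Esmall by blast
    define M where "M = max (Suc i) (Nk k)"
    have "\<forall>x\<in>Ov. av (\<Sum>j<M. c j * f j x) \<le> max \<epsilon> SF"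
    proof
      fix x assume x: "x \<in> Ov"
      define D where "D = F x - (\<Sum>j<M. c j * f j x)"
      have eq: "(\<Sum>j<M. c j * f j x) = F x - D" unfolding D_def by simp
      have D: "av D \<le> E k" using psum x M_def D_def by simp
      have Fx: "av (F x) \<le> SF" using SF(2) x by blast
      have "av (F x - D) \<le> av (F x) \<or> av (F x - D) \<le> av D" using av_diff[of "F x" D] by (simp add: le_max_iff_disj)
      then have "av (F x - D) \<le> max \<epsilon> SF"
      proof
        assume "av (F x - D) \<le> av (F x)" then show ?thesis using Fx by (simp add: le_max_iff_disj)
      next
        assume "av (F x - D) \<le> av D" then show ?thesis using D k by (simp add: le_max_iff_disj)
      qed
      then show "av (\<Sum>j<M. c j * f j x) \<le> max \<epsilon> SF" unfolding eq .
    qed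
    from coef_bound[where b=c, OF this] show "av (c i) \<le> max \<epsilon> SF" using M_def by simp
  qed
  have bdd: "bdd_above (range (\<lambda>n. av (c n)))" by (rule bdd_aboveI2[where M=SF]) (rule cle)
  define S where "S = (SUP n. av (c n))"
  have S1: "S \<le> SF" unfolding S_def using cle by (intro cSUP_least) auto
  have S0: "0 \<le> S" unfolding S_def using bdd cSUP_upper[of 0 UNIV "\<lambda>n. av (c n)"] av_nonneg order.trans by blast
  have cS: "av (c i) \<le> S" for i unfolding S_def using bdd by (rule cSUP_upper[OF UNIV_I])
  have FS: "av (F x) \<le> S" if x: "x \<in> Ov" for x
  proof (rule le_eps[OF _ S0], intro allI impI)
    fix \<epsilon> :: real assume "\<epsilon> > 0"
    then obtain k where k: "E k < \<epsilon>" using Esmall by blast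
    have 1: "av (F x - (\<Sum>i<Nk k. c i * f i x)) \<le> E k" using psum x by simp
    have 2: "av (\<Sum>i<Nk k. c i * f i x) \<le> S"
    proof (rule av_sum_le[OF S0])
      fix i show "av (c i * f i x) \<le> S" using cS[of i] f_O[OF x] inO
        by (metis av_mult_le1 mult.commute)
    qed
    have "F x = (F x - (\<Sum>i<Nk k. c i * f i x)) + (\<Sum>i<Nk k. c i * f i x)" by simp
    then have "av (F x) \<le> max (av (F x - (\<Sum>i<Nk k. c i * f i x))) (av (\<Sum>i<Nk k. c i * f i x))"
      by (metis av_add)
    then show "av (F x) \<le> max \<epsilon> S" using 1 2 k by (simp add: le_max_iff_disj) linarith
  qed
  have "SF \<le> S" unfolding SF_def supnorm_def
  proof (intro cSUP_least)
    show "Ov \<noteq> {}" using O_0 by blast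
  qed (use FS in auto)
  then have "supnorm av F = (SUP n. av (c n))" using S1 SF_def S_def by simp
  then show ?thesis using ctend stend by blast
qed

theorem main: "orthonormal_basis av (digit_ext q e)"
  unfolding orthonormal_basis_def using f_cont expansion by blast

end

theorem theorem3p3:
  fixes av :: "'a::field \<Rightarrow> real"
    and H :: "nat \<Rightarrow> 'a set"
    and e :: "nat \<Rightarrow> 'a \<Rightarrow> 'a"
  assumes "local_field av"
    and "\<forall>n\<ge>1. open_subgroup_O av (H n)"
    and "\<forall>n\<ge>1. H (Suc n) \<subseteq> H n"
    and "(\<Inter>n\<in>{1..}. H n) = {0}"
    and "\<forall>j. cont_O av (e j)"
    and "\<forall>j. \<forall>x \<in> intring av. e j x \<in> intring av"
    and "\<forall>n\<ge>1. \<forall>j<n. \<forall>x \<in> intring av. \<forall>y \<in> intring av.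
           x - y \<in> H n \<longrightarrow> red av (e j x) = red av (e j y)"
    and "\<forall>n\<ge>1. bij_betw (induced_map av e n) (cosets_O av (H n))
                         (PiE {..<n} (\<lambda>_. resfield av))"
  shows "orthonormal_basis av (digit_ext (card (resfield av)) e)"
proof -
  have na: "nonarch_abs av" using assms(1) unfolding local_field_def by blast
  interpret setting av H e
    by (rule setting.intro[OF lf.intro[OF vf.intro[OF na] lf_axioms.intro[OF assms(1)]] setting_axioms.intro])
       (fact assms)+
  show ?thesis by (rule main)
qed

end
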